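(* Let $q$ be a prime power and $d$ an integer with $5\le d\le q$; put $n=q+1$. Let $\mathcal C$ be the $[q+1,q+2-d,d]_q$ normalized generalized doubly extended Reed--Solomon (GDRS) code. Let $\mathcal V^{(2)}$ be a coset of weight $2$ of $\mathcal C$ with coset leader $\mathbf v_2(j_1,j_2;\gamma_1,\gamma_2)$, and let $\beta$ be a primitive element of $\mathbb F_q$ and $\lambda_0\in\mathbb Z_{q-1}$ be such that $\beta^{\lambda_0}=-\gamma_2/\gamma_1$. Then the weight distribution of $\mathcal V^{(2)}$ does not depend on the positions $j_1,j_2$, and: (i) $B_w(\mathcal V^{(2)})=0$ for $w\in\{0,1,\dots,d-3\}\setminus\{2\}$; $B_2(\mathcal V^{(2)})=1$; $B_{d-2}(\mathcal V^{(2)})=\mathrm P^+_{q-1,d-2}(\lambda_0)=\mathrm P^\times_{q,d-2}(-\gamma_2/\gamma_1)$; and for $w=d-1,d,\dots,q+1$, $$B_w(\mathcal V^{(2)})=A_w(\mathcal C)-\Omega^{(0)}_w+\Omega^{(2)}_w+(-1)^{w-d}\binom{q+3-d}{q+1-w}\mathrm P^+_{q-1,d-2}(\lambda_0).$$ (ii) The value $\mathrm P^+_{q-1,d-2}(\lambda)$ is the same for all $\lambda\in\mathbb Z_{q-1}$ if and only if all $\binom{n}{2}(q-1)^2$ cosets of weight $2$ of $\mathcal C$ have the same weight distribution; and in that case, for every coset $\mathcal V^{(2)}$ of weight $2$: $B_w(\mathcal V^{(2)})=0$ for $w\in\{0,\dots,d-3\}\setminus\{2\}$, $B_2(\mathcal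 V^{(2)})=1$, $B_{d-2}(\mathcal V^{(2)})=\frac{1}{q-1}\binom{q-1}{d-2}=\frac{1}{d-2}\binom{q-2}{d-3}$, and for $w=d-1,\dots,q+1$, $$B_w(\mathcal V^{(2)})=A_w(\mathcal C)-\Omega^{(0)}_w+\Omega^{(2)}_w+(-1)^{w-d}\binom{q+3-d}{q+1-w}\cdot\frac{1}{q-1}\binom{q-1}{d-2}.$$ (iii) If $\gcd(q-1,d-2)=1$, then $\mathrm P^+_{q-1,d-2}(\lambda)$ is the same for all $\lambda\in\mathbb Z_{q-1}$, all $\binom n2(q-1)^2$ cosets of weight $2$ have the same weight distribution, all formulas of (ii) hold, the code $\mathcal C$ is $2$-regular, and $\frac{1}{q-1}\binom{q-1}{d-2}=\frac{1}{d-2}\binom{q-2}{d-3}$ is an integer.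
   Context: Normalized GDRS code: the $\mathbb F_q$-linear code of length $q+1$ which is the kernel of the $(d-1)\times(q+1)$ parity check matrix whose first $q$ columns are $(1,m,m^2,\dots,m^{d-2})^{T}$ for $m$ running over all elements of $\mathbb F_q$ (the nonzero ones $m_1,\dots,m_{q-1}$ and then $m_q=0$) and whose last column is $(0,\dots,0,1)^{T}$; it is an MDS code with minimum distance $d$. A coset of a code $\mathcal C$ is $\mathbf v+\mathcal C$; its weight is the minimum Hamming weight of its vectors, and a coset leader is a vector of minimal weight. $\mathbf v_2(j_1,j_2;\gamma_1,\gamma_2)$ denotes the vector of $\mathbb F_q^{q+1}$ with entries $\gamma_1,\gamma_2\in\mathbb F_q^*$ in positions $j_1\ne j_2$ and zeros elsewhere. $B_w(\mathcal V)$ is the number of vectors of Hamming weight $w$ in the coset $\mathcal V$; $A_w(\mathcal C)$ is the number of codewords of weight $w$, given by $A_w(\mathcal C)=\binom{n}{w}\sum_{j=0}^{w-d}(-1)^j\binom wj(q^{w-d+1-j}-1)$ for $w\ge d$ and $0$ for $0<w<d$. Further $\Omega^{(0)}_w=(-1)^{w-d}\binom{q+1}{w}\binom{w-1}{d-2}$ and $\Omega^{(2)}_w=(-1)^{w-d}\binom{q-1}{w-2}\binom{w-3}{d-4}$. For positive integers $\mu<R$ and $\lambda\in\mathbb Z_R$ (integers mod $R$), $\mathrm P^+_{R,\mu}(\lambda)$ is the number of $\mu$-element subsets $\{\lambda_1,\dots,\lambda_\mu\}\subset\mathbb Z_R$ (distinct elements) with $\lambda_1+\dots+\lambda_\mu=\lambda$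 in $\mathbb Z_R$. For $\mu<q-1$ and $\gamma\in\mathbb F_q^*$, $\mathrm P^\times_{q,\mu}(\gamma)$ is the number of $\mu$-element subsets $\{\alpha_1,\dots,\alpha_\mu\}\subset\mathbb F_q^*$ with $\alpha_1\cdots\alpha_\mu=\gamma$. A code is $2$-regular if for every $W\in\{0,1,2\}$ all cosets of weight $W$ have the same weight distribution. *)

theory Defs
  imports Complex_Main
begin

text \<open>Vectors of length n over a field are functions nat => 'a vanishing outside {..<n};
 positions are 0..n-1 (position j corresponds to the paper's j+1).\<close>

definition vecs :: "nat \<Rightarrow> (nat \<Rightarrow> 'a::zero) set" where
  "vecs n = {v. \<forall>j\<ge>n. v j = 0}"

definition hw :: "nat \<Rightarrow> (nat \<Rightarrow> 'a::zero) \<Rightarrow> nat" where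
  "hw n v = card {j. j < n \<and> v j \<noteq> 0}"

text \<open>Normalized GDRS code of length q+1: m 0, ..., m (q-1) enumerate the field with
 m (q-1) = 0 (columns 1..q of the paper); position q is the column (0,...,0,1)^T.
 Row i (i = 0..d-2) of the parity check matrix has entries m j ^ i (0^0 = 1).\<close>

definition gdrs_code :: "(nat \<Rightarrow> 'a::field) \<Rightarrow> nat \<Rightarrow> nat \<Rightarrow> (nat \<Rightarrow> 'a) set" where
  "gdrs_code m q d = {v \<in> vecs (q+1). \<forall>i < d - 1.
      (\<Sum>j<q. m j ^ i * v j) + (if i = d - 2 then v q else 0) = 0}"

definition coset_of :: "(nat \<Rightarrow> 'a::field) set \<Rightarrow> (nat \<Rightarrow> 'a) \<Rightarrow> (nat \<Rightarrow> 'a) set" where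
  "coset_of C v = (\<lambda>c. (\<lambda>j. v j + c j)) ` C"

definition is_coset :: "nat \<Rightarrow> (nat \<Rightarrow> 'a::field) set \<Rightarrow> (nat \<Rightarrow> 'a) set \<Rightarrow> bool" where
  "is_coset n C V \<longleftrightarrow> (\<exists>v \<in> vecs n. V = coset_of C v)"

definition coset_weight :: "nat \<Rightarrow> (nat \<Rightarrow> 'a::zero) set \<Rightarrow> nat" where
  "coset_weight n V = Min (hw n ` V)"

definition B :: "nat \<Rightarrow> nat \<Rightarrow> (nat \<Rightarrow> 'a::zero) set \<Rightarrow> nat" where
  "B n w V = card {x \<in> V. hw n x = w}"

definition same_wd :: "nat \<Rightarrow> (nat \<Rightarrow> 'a::zero) set \<Rightarrow> (nat \<Rightarrow> 'a) set \<Rightarrow> bool" where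
  "same_wd n V V' \<longleftrightarrow> (\<forall>w. B n w V = B n w V')"

definition all_cosets_same_wd :: "nat \<Rightarrow> (nat \<Rightarrow> 'a::field) set \<Rightarrow> nat \<Rightarrow> bool" where
  "all_cosets_same_wd n C W \<longleftrightarrow> (\<forall>V V'. is_coset n C V \<and> is_coset n C V'
      \<and> coset_weight n V = W \<and> coset_weight n V' = W \<longrightarrow> same_wd n V V')"

definition two_regular :: "nat \<Rightarrow> (nat \<Rightarrow> 'a::field) set \<Rightarrow> bool" where
  "two_regular n C \<longleftrightarrow> (\<forall>W \<in> {0,1,2}. all_cosets_same_wd n C W)"

definition v2 :: "nat \<Rightarrow> nat \<Rightarrow> 'a::zero \<Rightarrow> 'a \<Rightarrow> nat \<Rightarrow> 'a" where
  "v2 j1 j2 g1 g2 = (\<lambda>j. if j = j1 then g1 else if j = j2 then g2 else 0)"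

definition Pplus :: "nat \<Rightarrow> nat \<Rightarrow> nat \<Rightarrow> nat" where
  "Pplus R \<mu> l = card {S. S \<subseteq> {..<R} \<and> card S = \<mu> \<and> (\<Sum>S) mod R = l}"

definition Ptimes :: "nat \<Rightarrow> 'a::{field,finite} \<Rightarrow> nat" where
  "Ptimes \<mu> g = card {S :: 'a set. 0 \<notin> S \<and> card S = \<mu> \<and> (\<Prod>S) = g}"

definition neg1pow :: "int \<Rightarrow> int" where
  "neg1pow k = (if even k then 1 else -1)"

definition Omega0 :: "nat \<Rightarrow> nat \<Rightarrow> nat \<Rightarrow> int" where
  "Omega0 q d w = neg1pow (int w - int d) * int ((q+1) choose w) * int ((w-1) choose (d-2))"

definition Omega2 :: "nat \<Rightarrow> nat \<Rightarrow> nat \<Rightarrow> int" where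
  "Omega2 q d w = neg1pow (int w - int d) * int ((q-1) choose (w-2)) * int ((w-3) choose (d-4))"

text \<open>The formulas of part (ii) for a coset V of weight 2 (A_w(C) = B n w C).\<close>
definition formulas_ii :: "nat \<Rightarrow> nat \<Rightarrow> (nat \<Rightarrow> 'a::field) set \<Rightarrow> (nat \<Rightarrow> 'a) set \<Rightarrow> bool" where
  "formulas_ii q d C V \<longleftrightarrow>
     (\<forall>w. w \<le> d - 3 \<and> w \<noteq> 2 \<longrightarrow> B (q+1) w V = 0) \<and>
     B (q+1) 2 V = 1 \<and>
     real (B (q+1) (d-2) V) = real ((q-1) choose (d-2)) / real (q-1) \<and>
     real ((q-1) choose (d-2)) / real (q-1) = real ((q-2) choose (d-3)) / real (d-2) \<and>
     (\<forall>w. d - 1 \<le> w \<and> w \<le> q + 1 \<longrightarrow>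
        real (B (q+1) w V) = real_of_int (int (B (q+1) w C) - Omega0 q d w + Omega2 q d w)
          + real_of_int (neg1pow (int w - int d) * int ((q+3-d) choose (q+1-w)))
            * (real ((q-1) choose (d-2)) / real (q-1)))"

end

theory Submission
  imports Defs "HOL-Computational_Algebra.Polynomial" "HOL-Library.FuncSet"
begin



locale gd =
  fixes m :: "nat \<Rightarrow> 'a::{field,finite}" and d :: nat and q :: nat
  assumes qdef: "q = card (UNIV::'a set)"
  assumes enum: "bij_betw m {..<q} UNIV" and d5: "5 \<le> d" and dq: "d \<le> q"
begin

definition "CC = gdrs_code m q d"

definition row :: "nat \<Rightarrow> (nat \<Rightarrow> 'a) \<Rightarrow> 'a" where
  "row i x = (\<Sum>j<q. m j ^ i * x j) + (if i = d - 2 then x q else 0)"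

definition spt :: "(nat \<Rightarrow> 'a) \<Rightarrow> nat set" where
  "spt x = {j. j < (q+1) \<and> x j \<noteq> 0}"

lemma finite_spt[simp]: "finite (spt x)" unfolding spt_def by auto
lemma spt_sub: "spt x \<subseteq> {..<(q+1)}" unfolding spt_def by auto
lemma hw_spt: "hw (q+1) x = card (spt x)" unfolding hw_def spt_def by simp
lemma hw_spt2: "hw (Suc q) x = card (spt x)" unfolding hw_def spt_def by simp

lemma CC_iff: "x \<in> CC \<longleftrightarrow> x \<in> vecs (q+1) \<and> (\<forall>i<d-1. row i x = 0)"
  unfolding CC_def gdrs_code_def row_def by auto

lemma row_add: "row i (\<lambda>j. x j + y j) = row i x + row i y"
  unfolding row_def by (simp add: sum.distrib algebra_simps)
lemma row_diff: "row i (\<lambda>j. x j - y j) = row i x - row i y"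
  unfolding row_def by (simp add: sum_subtractf algebra_simps)
lemma row_zero: "row i (\<lambda>j. 0) = 0"
  unfolding row_def by simp

lemma vecs_add: "(x::nat\<Rightarrow>'a) \<in> vecs k \<Longrightarrow> y \<in> vecs k \<Longrightarrow> (\<lambda>j. x j + y j) \<in> vecs k"
  unfolding vecs_def by auto
lemma vecs_diff: "(x::nat\<Rightarrow>'a) \<in> vecs k \<Longrightarrow> y \<in> vecs k \<Longrightarrow> (\<lambda>j. x j - y j) \<in> vecs k"
  unfolding vecs_def by auto

lemma zero_CC: "(\<lambda>j. 0) \<in> CC"
  by (simp add: CC_iff row_zero vecs_def)
lemma CC_add: "x \<in> CC \<Longrightarrow> y \<in> CC \<Longrightarrow> (\<lambda>j. x j + y j) \<in> CC"
  by (simp add: CC_iff row_add vecs_add)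
lemma CC_diff: "x \<in> CC \<Longrightarrow> y \<in> CC \<Longrightarrow> (\<lambda>j. x j - y j) \<in> CC"
  by (simp add: CC_iff row_diff vecs_diff)

lemma m_inj: "j < q \<Longrightarrow> k < q \<Longrightarrow> m j = m k \<Longrightarrow> j = k"
  using enum unfolding bij_betw_def inj_on_def by auto

lemma poly_sum_ext:
  assumes "degree (p::'a poly) \<le> N"
  shows "poly p a = (\<Sum>i\<le>N. coeff p i * a ^ i)"
proof -
  have "poly p a = (\<Sum>i\<le>degree p. coeff p i * a ^ i)" by (simp add: poly_altdef)
  also have "\<dots> = (\<Sum>i\<le>N. coeff p i * a ^ i)"
    by (rule sum.mono_neutral_left) (use assms in \<open>auto simp: coeff_eq_0\<close>)
  finally show ?thesis .
qed

lemma poly_row: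
  assumes "degree p \<le> d - 2"
  shows "(\<Sum>i\<le>d-2. coeff p i * row i x) = (\<Sum>j<q. poly p (m j) * x j) + coeff p (d-2) * x q"
proof -
  have "(\<Sum>i\<le>d-2. coeff p i * row i x) =
     (\<Sum>i\<le>d-2. (\<Sum>j<q. coeff p i * m j ^ i * x j)) + (\<Sum>i\<le>d-2. coeff p i * (if i = d - 2 then x q else 0))"
    unfolding row_def by (simp add: algebra_simps sum.distrib sum_distrib_left)
  also have "(\<Sum>i\<le>d-2. coeff p i * (if i = d - 2 then x q else 0)) = coeff p (d-2) * x q"
    by (simp add: if_distrib cong: if_cong)
  also have "(\<Sum>i\<le>d-2. (\<Sum>j<q. coeff p i * m j ^ i * x j)) = (\<Sum>j<q. poly p (m j) * x j)"
    by (subst sum.swap) (simp add: poly_sum_ext[OF assms] sum_distrib_right)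
  finally show ?thesis .
qed

lemma CC_poly:
  assumes "x \<in> CC" "degree p \<le> d - 2"
  shows "(\<Sum>j<q. poly p (m j) * x j) + coeff p (d-2) * x q = 0"
proof -
  have "\<forall>i\<le>d-2. row i x = 0" using assms(1) d5 unfolding CC_iff by auto
  then show ?thesis using poly_row[OF assms(2), of x] by simp
qed

definition lin :: "nat set \<Rightarrow> 'a poly" where
  "lin A = (\<Prod>k\<in>A. [:- m k, 1:])"

lemma lin_poly: "finite A \<Longrightarrow> poly (lin A) a = (\<Prod>k\<in>A. a - m k)"
  unfolding lin_def by (simp add: poly_prod)
lemma lin_degree: "finite A \<Longrightarrow> degree (lin A) = card A"
  unfolding lin_def by (subst degree_prod_sum_eq) auto
lemma lin_lead: "lead_coeff (lin A) = 1"
  unfolding lin_def by (simp add: lead_coeff_prod)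

lemma sum_single:
  assumes "j0 < q" "\<And>j. j < q \<Longrightarrow> j \<noteq> j0 \<Longrightarrow> f j = 0"
  shows "(\<Sum>j<q. f j) = f j0"
  using assms by (subst sum.remove[of _ j0]) auto

lemma MDS:
  assumes x: "x \<in> CC" and w: "card (spt x) \<le> d - 1"
  shows "x = (\<lambda>j. 0)"
proof (rule ccontr)
  assume "x \<noteq> (\<lambda>j. 0)"
  then obtain j0 where "x j0 \<noteq> 0" by auto
  moreover have xv: "x \<in> vecs (q+1)" using x CC_iff by auto
  ultimately have j0: "j0 < (q+1) \<and> x j0 \<noteq> 0" unfolding vecs_def using not_less by blast
  hence j0s: "j0 \<in> spt x" unfolding spt_def by auto
  from j0 have j0: "j0 < q + 1" "x j0 \<noteq> 0" by auto
  show False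
  proof (cases "j0 < q")
    case True
    define A where "A = spt x \<inter> {..<q} - {j0}"
    have fA: "finite A" unfolding A_def by auto
    have cA: "card A \<le> d - 2"
    proof -
      have "A \<subseteq> spt x - {j0}" unfolding A_def by auto
      hence "card A \<le> card (spt x - {j0})" by (intro card_mono) auto
      also have "\<dots> = card (spt x) - 1" using j0s by simp
      finally show ?thesis using w by linarith
    qed
    have cq: "coeff (lin A) (d-2) * x q = 0"
    proof (cases "x q = 0")
      case False
      hence "q \<in> spt x" unfolding spt_def by auto
      hence "A \<subseteq> spt x - {j0, q}" unfolding A_def by auto
      hence "card A \<le> card (spt x - {j0, q})" by (intro card_mono) auto
      also have "\<dots> = card (spt x) - 2" using j0s \<open>q \<in> spt x\<close> True by (simp add: card_Diff_subset)
      finally have "degree (lin A) < d - 2" using w lin_degree[OF fA] d5 by linarith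
      thus ?thesis by (simp add: coeff_eq_0)
    qed simp
    have "(\<Sum>j<q. poly (lin A) (m j) * x j) = poly (lin A) (m j0) * x j0"
    proof (rule sum_single[OF True])
      fix j assume "j < q" "j \<noteq> j0"
      show "poly (lin A) (m j) * x j = 0"
      proof (cases "x j = 0")
        case False
        hence "j \<in> A" unfolding A_def spt_def using \<open>j < q\<close> \<open>j \<noteq> j0\<close> by auto
        thus ?thesis using fA by (auto simp: lin_poly prod_zero_iff)
      qed simp
    qed
    moreover have "poly (lin A) (m j0) \<noteq> 0"
    proof -
      have "\<forall>k\<in>A. m j0 - m k \<noteq> 0"
      proof
        fix k assume "k \<in> A"
        hence "k < q" "k \<noteq> j0" unfolding A_def by auto
        thus "m j0 - m k \<noteq> 0" using m_inj[of k j0] True by auto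
      qed
      thus ?thesis using fA by (simp add: lin_poly)
    qed
    ultimately show False
      using CC_poly[OF x, of "lin A"] cq cA lin_degree[OF fA] j0 by simp
  next
    case False
    hence jq: "j0 = q" using j0 by simp
    define A where "A = spt x \<inter> {..<q}"
    have fA: "finite A" unfolding A_def by auto
    have cA: "card A \<le> d - 2"
    proof -
      have "A \<subseteq> spt x - {j0}" unfolding A_def using jq by auto
      hence "card A \<le> card (spt x - {j0})" by (intro card_mono) auto
      also have "\<dots> = card (spt x) - 1" using j0s by simp
      finally show ?thesis using w by linarith
    qed
    define p where "p = monom 1 (d - 2 - card A) * lin A"
    have "lin A \<noteq> 0" using lin_lead[of A] by auto
    moreover have dm: "\<And>k. degree (monom (1::'a) k) = k" by (rule degree_monom_eq) simp
    moreover have "monom (1::'a) k \<noteq> 0" for k by simp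
    ultimately have "degree p = degree (monom (1::'a) (d - 2 - card A)) + degree (lin A)"
      unfolding p_def by (intro degree_mult_eq) auto
    hence dp: "degree p = d - 2" using cA lin_degree[OF fA] dm[of "d - 2 - card A"] by linarith
    have lp: "lead_coeff p = 1" unfolding p_def by (simp only: lead_coeff_mult lin_lead lead_coeff_monom) simp
    have "(\<Sum>j<q. poly p (m j) * x j) = 0"
    proof (rule sum.neutral, intro ballI)
      fix j assume "j \<in> {..<q}"
      show "poly p (m j) * x j = 0"
      proof (cases "x j = 0")
        case False
        hence "j \<in> A" unfolding A_def spt_def using \<open>j \<in> {..<q}\<close> by auto
        thus ?thesis using fA by (auto simp: p_def lin_poly prod_zero_iff)
      qed simp
    qed
    thus False using CC_poly[OF x, of p] dp lp j0 jq by simp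
  qed
qed

end



lemma card_group:
  assumes "finite X" "finite I" "g ` X \<subseteq> I"
  shows "card X = (\<Sum>y\<in>I. card {x\<in>X. g x = y})"
proof -
  have "(\<Sum>y\<in>I. (\<Sum>x\<in>{x\<in>X. g x = y}. (1::nat))) = (\<Sum>x\<in>X. 1)"
    by (rule sum.group[OF assms])
  thus ?thesis by simp
qed

definition sup_on :: "'b set \<Rightarrow> ('b \<Rightarrow> 'a::zero) set" where
  "sup_on U = {x. \<forall>j. j \<notin> U \<longrightarrow> x j = 0}"

definition extz :: "'b set \<Rightarrow> ('b \<Rightarrow> 'a) \<Rightarrow> 'b \<Rightarrow> 'a::zero" where
  "extz U f = (\<lambda>i. if i \<in> U then f i else 0)"

lemma sup_on_image: "sup_on U = extz U ` (PiE U (\<lambda>_. UNIV))"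
proof
  show "sup_on U \<subseteq> extz U ` (PiE U (\<lambda>_. UNIV))"
  proof
    fix x assume x: "x \<in> sup_on U"
    have "x = extz U (restrict x U)" using x unfolding sup_on_def extz_def by auto
    thus "x \<in> extz U ` (PiE U (\<lambda>_. UNIV))" by auto
  qed
qed (auto simp: sup_on_def extz_def)

lemma extz_inj: "inj_on (extz U) (PiE U (\<lambda>_. UNIV))"
proof (rule inj_onI)
  fix f g assume f: "f \<in> PiE U (\<lambda>_. UNIV)" and g: "g \<in> PiE U (\<lambda>_. UNIV)" and e: "extz U f = extz U g"
  show "f = g"
  proof
    fix i show "f i = g i"
      using f g fun_cong[OF e, of i] unfolding extz_def by (cases "i \<in> U") (auto simp: PiE_def extensional_def)
  qed
qed

lemma finite_sup_on: "finite U \<Longrightarrow> finite (sup_on U :: ('b \<Rightarrow> 'a::{zero,finite}) set)"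
  by (simp add: sup_on_image finite_PiE)

lemma card_sup_on: "finite U \<Longrightarrow> card (sup_on U :: ('b \<Rightarrow> 'a::{zero,finite}) set) = card (UNIV::'a set) ^ card U"
  by (simp add: sup_on_image card_image[OF extz_inj] card_PiE)

context gd begin

lemma vecs_sup: "vecs (q+1) = sup_on {..<q+1}"
  unfolding vecs_def sup_on_def by auto

lemma finite_vecs: "finite (vecs (q+1) :: (nat \<Rightarrow> 'a) set)"
  unfolding vecs_sup by (rule finite_sup_on) simp

lemma spt_sup: "x \<in> vecs (q+1) \<Longrightarrow> spt x \<subseteq> U \<longleftrightarrow> x \<in> sup_on U"
proof -
  assume x: "x \<in> vecs (q+1)"
  show ?thesis
  proof
    assume s: "spt x \<subseteq> U"
    { fix j assume j: "j \<notin> U"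
      have "x j = 0"
      proof (cases "j < q + 1")
        case True thus ?thesis using s j unfolding spt_def by blast
      next
        case False thus ?thesis using x unfolding vecs_def by simp
      qed }
    thus "x \<in> sup_on U" unfolding sup_on_def by blast
  next
    assume "x \<in> sup_on U"
    thus "spt x \<subseteq> U" unfolding sup_on_def spt_def by blast
  qed
qed

lemma CC_vecs: "CC \<subseteq> vecs (q+1)" using CC_iff by auto
lemma finite_CC: "finite CC" using finite_subset[OF CC_vecs finite_vecs] .

lemma coset_iff:
  assumes "v \<in> vecs (q+1)"
  shows "x \<in> coset_of CC v \<longleftrightarrow> x \<in> vecs (q+1) \<and> (\<lambda>j. x j - v j) \<in> CC"
proof
  assume "x \<in> coset_of CC v"
  then obtain c where c: "c \<in> CC" "x = (\<lambda>j. v j + c j)" unfolding coset_of_def by auto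
  hence "(\<lambda>j. x j - v j) = c" by auto
  thus "x \<in> vecs (q+1) \<and> (\<lambda>j. x j - v j) \<in> CC" using c assms CC_vecs vecs_add by auto
next
  assume a: "x \<in> vecs (q+1) \<and> (\<lambda>j. x j - v j) \<in> CC"
  have "x = (\<lambda>j. v j + (x j - v j))" by auto
  thus "x \<in> coset_of CC v" unfolding coset_of_def using a by (intro image_eqI[where x="\<lambda>j. x j - v j"]) auto
qed

lemma coset_vecs: "v \<in> vecs (q+1) \<Longrightarrow> coset_of CC v \<subseteq> vecs (q+1)"
  using coset_iff by auto

lemma finite_coset: "v \<in> vecs (q+1) \<Longrightarrow> finite (coset_of CC v)"
  using finite_subset[OF coset_vecs finite_vecs] .

lemma coset_self: "v \<in> vecs (q+1) \<Longrightarrow> v \<in> coset_of CC v"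
  using coset_iff zero_CC by simp

lemma coset_eq:
  assumes "v \<in> vecs (q+1)" "y \<in> coset_of CC v"
  shows "coset_of CC y = coset_of CC v"
proof -
  have y: "y \<in> vecs (q+1)" "(\<lambda>j. y j - v j) \<in> CC" using assms coset_iff by auto
  show ?thesis
  proof (intro set_eqI iffI)
    fix x assume "x \<in> coset_of CC y"
    hence x: "x \<in> vecs (q+1)" "(\<lambda>j. x j - y j) \<in> CC" using coset_iff y by auto
    have "(\<lambda>j. x j - v j) = (\<lambda>j. (x j - y j) + (y j - v j))" by auto
    thus "x \<in> coset_of CC v" using CC_add[OF x(2) y(2)] x assms coset_iff by auto
  next
    fix x assume "x \<in> coset_of CC v"
    hence x: "x \<in> vecs (q+1)" "(\<lambda>j. x j - v j) \<in> CC" using coset_iff assms by auto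
    have "(\<lambda>j. x j - y j) = (\<lambda>j. (x j - v j) - (y j - v j))" by auto
    thus "x \<in> coset_of CC y" using CC_diff[OF x(2) y(2)] x y coset_iff by auto
  qed
qed

lemma coset_zero: "coset_of CC (\<lambda>j. 0) = CC"
  using coset_iff[of "\<lambda>j. 0"] CC_vecs by (auto simp: vecs_def)

definition syn :: "(nat \<Rightarrow> 'a) \<Rightarrow> nat \<Rightarrow> 'a" where
  "syn x = (\<lambda>i. if i < d - 1 then row i x else 0)"

lemma syn_eq: "x \<in> vecs (q+1) \<Longrightarrow> y \<in> vecs (q+1) \<Longrightarrow> syn x = syn y \<longleftrightarrow> (\<lambda>j. x j - y j) \<in> CC"
proof -
  assume xy: "x \<in> vecs (q+1)" "y \<in> vecs (q+1)"
  have "syn x = syn y \<longleftrightarrow> (\<forall>i<d-1. row i x = row i y)"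
    unfolding syn_def by (auto simp: fun_eq_iff)
  also have "\<dots> \<longleftrightarrow> (\<forall>i<d-1. row i (\<lambda>j. x j - y j) = 0)" by (simp add: row_diff)
  also have "\<dots> \<longleftrightarrow> (\<lambda>j. x j - y j) \<in> CC" using vecs_diff[OF xy] CC_iff by auto
  finally show ?thesis .
qed

lemma MDS_sub:
  assumes "x \<in> CC" "spt x \<subseteq> U" "card U \<le> d - 1" "finite U"
  shows "x = (\<lambda>j. 0)"
proof -
  have "card (spt x) \<le> card U" using card_mono assms by auto
  thus ?thesis using MDS assms by auto
qed

lemma spt_diff_sub: "spt (\<lambda>j. x j - y j) \<subseteq> spt x \<union> spt y"
  unfolding spt_def by auto
lemma spt_add_sub: "spt (\<lambda>j. x j + y j) \<subseteq> spt x \<union> spt y"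
  unfolding spt_def by auto

lemma exists_in_coset:
  assumes v: "v \<in> vecs (q+1)" and U: "U \<subseteq> {..<q+1}" and cU: "d - 1 \<le> card U"
  shows "\<exists>x \<in> coset_of CC v. spt x \<subseteq> U"
proof -
  obtain U' where U': "U' \<subseteq> U" "card U' = d - 1" "finite U'"
    using obtain_subset_with_card_n[OF cU] by metis
  let ?S = "sup_on U' :: (nat \<Rightarrow> 'a) set"
  have Sv: "?S \<subseteq> vecs (q+1)" using U' U unfolding vecs_sup sup_on_def by auto
  have inj: "inj_on syn ?S"
  proof (rule inj_onI)
    fix x y assume x: "x \<in> ?S" and y: "y \<in> ?S" and e: "syn x = syn y"
    have xy: "x \<in> vecs (q+1)" "y \<in> vecs (q+1)" using x y Sv by auto
    have c: "(\<lambda>j. x j - y j) \<in> CC" using e syn_eq xy by auto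
    have "spt (\<lambda>j. x j - y j) \<subseteq> U'" using spt_sup[OF xy(1)] spt_sup[OF xy(2)] x y spt_diff_sub by blast
    hence "(\<lambda>j. x j - y j) = (\<lambda>j. 0)" using MDS_sub[OF c] U' by auto
    thus "x = y" by (auto simp: fun_eq_iff)
  qed
  have sub: "syn ` ?S \<subseteq> sup_on {..<d-1}" unfolding syn_def sup_on_def by auto
  have c2: "card (sup_on {..<d-1} :: (nat \<Rightarrow> 'a) set) = q ^ (d-1)"
    using card_sup_on[of "{..<d-1}"] qdef by simp
  have c1: "card ?S = q ^ (d-1)"
    using card_sup_on[OF U'(3)] U' qdef by simp
  have "card (syn ` ?S) = card (sup_on {..<d-1} :: (nat \<Rightarrow> 'a) set)"
    using card_image[OF inj] c1 c2 by simp
  hence "syn ` ?S = sup_on {..<d-1}" using card_subset_eq[OF finite_sup_on sub] by simp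
  moreover have "syn v \<in> sup_on {..<d-1}" unfolding syn_def sup_on_def by auto
  ultimately obtain x where x: "x \<in> ?S" "syn x = syn v" by (metis imageE)
  have xv: "x \<in> vecs (q+1)" using x Sv by auto
  hence "x \<in> coset_of CC v" using syn_eq[OF xv v] x coset_iff[OF v] by auto
  moreover have "spt x \<subseteq> U" using spt_sup[OF xv] x U' by auto
  ultimately show ?thesis by auto
qed

definition NN :: "(nat \<Rightarrow> 'a) set \<Rightarrow> nat set \<Rightarrow> nat" where
  "NN X U = card {x \<in> X. spt x \<subseteq> U}"

lemma NN_big:
  assumes v: "v \<in> vecs (q+1)" and U: "U \<subseteq> {..<q+1}" and cU: "d - 1 \<le> card U"
  shows "NN (coset_of CC v) U = NN CC U"
proof -
  obtain x0 where x0: "x0 \<in> coset_of CC v" "spt x0 \<subseteq> U" using exists_in_coset[OF assms] by auto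
  have x0v: "x0 \<in> vecs (q+1)" using x0 coset_vecs[OF v] by auto
  have cs: "coset_of CC x0 = coset_of CC v" using coset_eq[OF v x0(1)] .
  have "bij_betw (\<lambda>c j. x0 j + c j) {c \<in> CC. spt c \<subseteq> U} {x \<in> coset_of CC v. spt x \<subseteq> U}"
  proof (rule bij_betwI[where g = "\<lambda>x j. x j - x0 j"])
    show "(\<lambda>c j. x0 j + c j) \<in> {c \<in> CC. spt c \<subseteq> U} \<rightarrow> {x \<in> coset_of CC v. spt x \<subseteq> U}"
    proof
      fix c assume c: "c \<in> {c \<in> CC. spt c \<subseteq> U}"
      have "(\<lambda>j. x0 j + c j) \<in> coset_of CC x0" unfolding coset_of_def using c by auto
      moreover have "spt (\<lambda>j. x0 j + c j) \<subseteq> U" using spt_add_sub[of x0 c] x0 c by auto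
      ultimately show "(\<lambda>j. x0 j + c j) \<in> {x \<in> coset_of CC v. spt x \<subseteq> U}" using cs by auto
    qed
    show "(\<lambda>x j. x j - x0 j) \<in> {x \<in> coset_of CC v. spt x \<subseteq> U} \<rightarrow> {c \<in> CC. spt c \<subseteq> U}"
    proof
      fix x assume x: "x \<in> {x \<in> coset_of CC v. spt x \<subseteq> U}"
      hence "(\<lambda>j. x j - x0 j) \<in> CC" using coset_iff[OF x0v] cs by auto
      moreover have "spt (\<lambda>j. x j - x0 j) \<subseteq> U" using spt_diff_sub[of x x0] x0 x by auto
      ultimately show "(\<lambda>j. x j - x0 j) \<in> {c \<in> CC. spt c \<subseteq> U}" by auto
    qed
  qed auto
  thus ?thesis unfolding NN_def by (simp add: bij_betw_same_card)
qed

lemma NN_small_CC: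
  assumes "card U \<le> d - 2" "finite U"
  shows "NN CC U = 1"
proof -
  have "{x \<in> CC. spt x \<subseteq> U} = {(\<lambda>j. 0)}"
  proof (intro set_eqI iffI)
    fix x assume "x \<in> {x \<in> CC. spt x \<subseteq> U}"
    thus "x \<in> {(\<lambda>j. 0)}" using MDS_sub[of x U] assms by auto
  qed (auto simp: zero_CC spt_def)
  thus ?thesis unfolding NN_def by simp
qed

end



lemma sum_pow_card:
  assumes "finite R"
  shows "(\<Sum>U\<in>Pow R. (\<phi> (card U) :: int)) = (\<Sum>k\<le>card R. int (card R choose k) * \<phi> k)"
proof -
  have "(\<Sum>U\<in>Pow R. \<phi> (card U)) = (\<Sum>k\<le>card R. (\<Sum>U\<in>{U\<in>Pow R. card U = k}. \<phi> (card U)))"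
    by (rule sum.group[symmetric]) (use assms card_mono in auto)
  also have "\<dots> = (\<Sum>k\<le>card R. (\<Sum>U\<in>{U\<in>Pow R. card U = k}. \<phi> k))"
    by (intro sum.cong) auto
  also have "\<dots> = (\<Sum>k\<le>card R. int (card R choose k) * \<phi> k)"
  proof (intro sum.cong refl)
    fix k
    have "{U\<in>Pow R. card U = k} = {U. U \<subseteq> R \<and> card U = k}" by auto
    thus "(\<Sum>U\<in>{U\<in>Pow R. card U = k}. \<phi> k) = int (card R choose k) * \<phi> k"
      using n_subsets[OF assms, of k] by simp
  qed
  finally show ?thesis .
qed

lemma alt_partial:
  assumes "1 \<le> t"
  shows "(\<Sum>k\<le>e. (-1::int) ^ k * int (t choose k)) = (-1) ^ e * int ((t - 1) choose e)"
proof (induction e)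
  case 0 thus ?case by simp
next
  case (Suc e)
  obtain s where t: "t = Suc s" using assms by (cases t) auto
  have "(\<Sum>k\<le>Suc e. (-1::int) ^ k * int (t choose k)) = (-1) ^ e * int (s choose e) + (-1) ^ Suc e * int (t choose Suc e)"
    using Suc by (simp add: t)
  also have "\<dots> = (-1) ^ Suc e * int (s choose Suc e)" by (simp add: t algebra_simps)
  finally show ?case by (simp add: t)
qed

definition hh :: "nat \<Rightarrow> nat \<Rightarrow> int" where
  "hh t e = (\<Sum>k\<le>t. int (t choose k) * ((-1) ^ (t - k) * (if k \<le> e then 1 else 0)))"

lemma hh_closed:
  assumes "e < t"
  shows "hh t e = (-1) ^ (t + e) * int ((t - 1) choose e)"
proof -
  have "hh t e = (\<Sum>k\<in>{k\<in>{..t}. k \<le> e}. int (t choose k) * (-1) ^ (t - k))"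
    unfolding hh_def by (subst sum.inter_filter) (auto intro: sum.cong)
  also have "{k\<in>{..t}. k \<le> e} = {..e}" using assms by auto
  also have "(\<Sum>k\<in>{..e}. int (t choose k) * (-1) ^ (t - k)) = (\<Sum>k\<le>e. (-1) ^ t * ((-1::int) ^ k * int (t choose k)))"
  proof (intro sum.cong refl)
    fix k assume "k \<in> {..e}"
    hence "t = (t - k) + k" using assms by auto
    hence "(-1::int) ^ t = (-1) ^ (t - k) * (-1) ^ k" by (metis power_add)
    hence "(-1::int) ^ (t - k) = (-1) ^ t * (-1) ^ k"
      by (metis (no_types, lifting) mult.assoc mult.right_neutral power_minus1_even power_add mult_2 power_mult_distrib)
    thus "int (t choose k) * (-1) ^ (t - k) = (-1) ^ t * ((-1) ^ k * int (t choose k))" by simp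
  qed
  also have "\<dots> = (-1) ^ t * ((-1) ^ e * int ((t - 1) choose e))"
    using alt_partial[of t e] assms by (simp add: sum_distrib_left[symmetric])
  finally show ?thesis by (simp add: power_add)
qed




context gd begin

definition Tw :: "nat \<Rightarrow> nat set set" where
  "Tw w = {T. T \<subseteq> {..<q+1} \<and> card T = w}"

lemma finite_Tw: "finite (Tw w)"
  unfolding Tw_def by (rule finite_subset[of _ "Pow {..<q+1}"]) auto

definition EE :: "(nat \<Rightarrow> 'a) set \<Rightarrow> nat set \<Rightarrow> nat" where
  "EE X T = card {x \<in> X. spt x = T}"

lemma B_sum:
  assumes "finite X"
  shows "B (q+1) w X = (\<Sum>T\<in>Tw w. EE X T)"
proof -
  have "B (q+1) w X = (\<Sum>T\<in>Tw w. card {x \<in> {x\<in>X. hw (q+1) x = w}. spt x = T})"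
    unfolding B_def
    by (rule card_group) (use assms spt_sub in \<open>auto simp: Tw_def hw_spt hw_spt2\<close>)
  also have "\<dots> = (\<Sum>T\<in>Tw w. EE X T)"
    unfolding EE_def by (intro sum.cong refl arg_cong[where f=card]) (auto simp: Tw_def hw_spt hw_spt2)
  finally show ?thesis .
qed

lemma NN_sum:
  assumes "finite X" "finite U"
  shows "NN X U = (\<Sum>T\<in>Pow U. EE X T)"
proof -
  have "NN X U = (\<Sum>T\<in>Pow U. card {x \<in> {x\<in>X. spt x \<subseteq> U}. spt x = T})"
    unfolding NN_def by (rule card_group) (use assms in auto)
  also have "\<dots> = (\<Sum>T\<in>Pow U. EE X T)"
    unfolding EE_def by (intro sum.cong refl arg_cong[where f=card]) auto
  finally show ?thesis .
qed

lemma EE_mobius: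
  assumes "finite X" "finite T"
  shows "int (EE X T) = (\<Sum>U\<in>Pow T. (-1) ^ (card T - card U) * int (NN X U))"
proof (rule inclusion_exclusion_mobius[where g = "\<lambda>U. int (NN X U)" and f = "\<lambda>T. int (EE X T)", OF _ assms(2)])
  fix S :: "nat set" assume "finite S"
  thus "int (NN X S) = (\<Sum>T\<in>Pow S. int (EE X T))" using NN_sum[OF assms(1)] by simp
qed

definition YY :: "(nat \<Rightarrow> 'a) set \<Rightarrow> (nat \<Rightarrow> 'a) set" where
  "YY V = {y \<in> V. hw (q+1) y \<le> d - 2}"

lemma NN_diff:
  assumes v: "v \<in> vecs (q+1)" and U: "U \<subseteq> {..<q+1}"
  shows "int (NN (coset_of CC v) U) - int (NN CC U) =
    (if card U \<le> d - 2 then (\<Sum>y\<in>YY (coset_of CC v). (if spt y \<subseteq> U then 1 else 0)) - 1 else 0)"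
proof (cases "card U \<le> d - 2")
  case True
  have fU: "finite U" using U finite_subset by auto
  have fY: "finite (YY (coset_of CC v))" unfolding YY_def using finite_coset[OF v] by auto
  have "{x \<in> coset_of CC v. spt x \<subseteq> U} = {y \<in> YY (coset_of CC v). spt y \<subseteq> U}"
  proof (intro set_eqI iffI)
    fix x assume x: "x \<in> {x \<in> coset_of CC v. spt x \<subseteq> U}"
    hence "card (spt x) \<le> card U" using fU card_mono by auto
    thus "x \<in> {y \<in> YY (coset_of CC v). spt y \<subseteq> U}" using x True unfolding YY_def hw_spt by auto
  qed (auto simp: YY_def)
  hence "NN (coset_of CC v) U = card {y \<in> YY (coset_of CC v). spt y \<subseteq> U}" unfolding NN_def by simp
  also have "int \<dots> = (\<Sum>y\<in>YY (coset_of CC v). (if spt y \<subseteq> U then 1 else 0))"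
    using sum.inter_filter[OF fY, of "\<lambda>_. (1::int)" "\<lambda>y. spt y \<subseteq> U"] by simp
  finally show ?thesis using True NN_small_CC[OF True fU] by simp
next
  case False
  thus ?thesis using NN_big[OF v U] by simp
qed

definition FF :: "nat set \<Rightarrow> nat \<Rightarrow> int" where
  "FF S w = (\<Sum>T\<in>Tw w. \<Sum>U\<in>Pow T. (-1) ^ (card T - card U) * (if card U \<le> d - 2 \<and> S \<subseteq> U then 1 else 0))"

lemma general_formula:
  assumes v: "v \<in> vecs (q+1)"
  shows "int (B (q+1) w (coset_of CC v)) - int (B (q+1) w CC) =
     (\<Sum>y\<in>YY (coset_of CC v). FF (spt y) w) - FF {} w"
proof -
  let ?V = "coset_of CC v"
  let ?Y = "YY ?V"
  have fV: "finite ?V" using finite_coset[OF v] .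
  have fY: "finite ?Y" unfolding YY_def using fV by auto
  have "int (B (q+1) w ?V) - int (B (q+1) w CC) = (\<Sum>T\<in>Tw w. int (EE ?V T) - int (EE CC T))"
    using B_sum[OF fV] B_sum[OF finite_CC] by (simp add: sum_subtractf)
  also have "\<dots> = (\<Sum>T\<in>Tw w. \<Sum>U\<in>Pow T. (-1) ^ (card T - card U) * (int (NN ?V U) - int (NN CC U)))"
  proof (intro sum.cong refl)
    fix T assume T: "T \<in> Tw w"
    hence fT: "finite T" unfolding Tw_def using finite_subset by auto
    show "int (EE ?V T) - int (EE CC T) = (\<Sum>U\<in>Pow T. (-1) ^ (card T - card U) * (int (NN ?V U) - int (NN CC U)))"
      using EE_mobius[OF fV fT] EE_mobius[OF finite_CC fT] by (simp add: sum_subtractf algebra_simps)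
  qed
  also have "\<dots> = (\<Sum>T\<in>Tw w. \<Sum>U\<in>Pow T. (-1) ^ (card T - card U) *
      ((\<Sum>y\<in>?Y. (if card U \<le> d - 2 \<and> spt y \<subseteq> U then 1 else 0)) - (if card U \<le> d - 2 \<and> {} \<subseteq> U then 1 else 0)))"
  proof (intro sum.cong refl)
    fix T U assume T: "T \<in> Tw w" and U: "U \<in> Pow T"
    hence "U \<subseteq> {..<q+1}" unfolding Tw_def by auto
    thus "(-1) ^ (card T - card U) * (int (NN ?V U) - int (NN CC U)) = (-1) ^ (card T - card U) *
      ((\<Sum>y\<in>?Y. (if card U \<le> d - 2 \<and> spt y \<subseteq> U then 1 else 0)) - (if card U \<le> d - 2 \<and> {} \<subseteq> U then 1 else 0))"
      using NN_diff[OF v] by (cases "card U \<le> d - 2") auto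
  qed
  also have "\<dots> = (\<Sum>y\<in>?Y. FF (spt y) w) - FF {} w"
    unfolding FF_def
    by (simp add: right_diff_distrib sum_subtractf sum_distrib_left sum.swap[of _ ?Y])
  finally show ?thesis .
qed

end



lemma card_supersets:
  assumes N: "finite N" and S: "S \<subseteq> N"
  shows "card {T. T \<subseteq> N \<and> card T = w \<and> S \<subseteq> T} = (if card S \<le> w then (card N - card S) choose (w - card S) else 0)"
proof (cases "card S \<le> w")
  case True
  have fS: "finite S" using N S finite_subset by auto
  have "bij_betw (\<lambda>T'. S \<union> T') {T'. T' \<subseteq> N - S \<and> card T' = w - card S} {T. T \<subseteq> N \<and> card T = w \<and> S \<subseteq> T}"
  proof (rule bij_betwI[where g = "\<lambda>T. T - S"])
    show "(\<lambda>T'. S \<union> T') \<in> {T'. T' \<subseteq> N - S \<and> card T' = w - card S} \<rightarrow> {T. T \<subseteq> N \<and> card T = w \<and> S \<subseteq> T}"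
    proof
      fix T' assume T': "T' \<in> {T'. T' \<subseteq> N - S \<and> card T' = w - card S}"
      hence "finite T'" using N finite_subset by blast
      hence "card (S \<union> T') = card S + card T'" using T' fS by (intro card_Un_disjoint) auto
      thus "S \<union> T' \<in> {T. T \<subseteq> N \<and> card T = w \<and> S \<subseteq> T}" using T' S True by auto
    qed
    show "(\<lambda>T. T - S) \<in> {T. T \<subseteq> N \<and> card T = w \<and> S \<subseteq> T} \<rightarrow> {T'. T' \<subseteq> N - S \<and> card T' = w - card S}"
    proof
      fix T assume T: "T \<in> {T. T \<subseteq> N \<and> card T = w \<and> S \<subseteq> T}"
      hence "card (T - S) = card T - card S" using fS by (intro card_Diff_subset) auto
      thus "T - S \<in> {T'. T' \<subseteq> N - S \<and> card T' = w - card S}" using T by auto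
    qed
  qed auto
  hence "card {T. T \<subseteq> N \<and> card T = w \<and> S \<subseteq> T} = card {T'. T' \<subseteq> N - S \<and> card T' = w - card S}"
    by (simp add: bij_betw_same_card)
  also have "\<dots> = (card N - card S) choose (w - card S)"
    using n_subsets[of "N - S" "w - card S"] N S by (simp add: card_Diff_subset fS)
  finally show ?thesis using True by simp
next
  case False
  have "{T. T \<subseteq> N \<and> card T = w \<and> S \<subseteq> T} = {}"
  proof -
    { fix T assume "T \<subseteq> N" "card T = w" "S \<subseteq> T"
      hence "card S \<le> w" using card_mono[of T S] N finite_subset by auto }
    thus ?thesis using False by blast
  qed
  thus ?thesis using False by (simp only: card.empty) simp
qed

context gd begin

lemma inner_closed:
  assumes S: "card S = a" "a \<le> d - 2" and T: "T \<in> Tw w" "S \<subseteq> T"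
  shows "(\<Sum>U\<in>Pow T. (-1) ^ (card T - card U) * (if card U \<le> d - 2 \<and> S \<subseteq> U then 1 else 0)) = hh (w - a) (d - 2 - a)"
proof -
  have fT: "finite T" and cT: "card T = w" using T unfolding Tw_def using finite_subset by auto
  have fS: "finite S" using fT T finite_subset by auto
  have "(\<Sum>U\<in>Pow T. (-1) ^ (card T - card U) * (if card U \<le> d - 2 \<and> S \<subseteq> U then 1 else 0)) =
        (\<Sum>U\<in>{U\<in>Pow T. S \<subseteq> U}. (-1::int) ^ (w - card U) * (if card U \<le> d - 2 then 1 else 0))"
    by (subst sum.inter_filter) (use fT cT in \<open>auto intro!: sum.cong\<close>)
  also have "{U\<in>Pow T. S \<subseteq> U} = (\<lambda>U'. S \<union> U') ` Pow (T - S)"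
  proof (intro set_eqI iffI)
    fix U assume "U \<in> {U\<in>Pow T. S \<subseteq> U}"
    hence "U = S \<union> (U - S)" "U - S \<in> Pow (T - S)" by auto
    thus "U \<in> (\<lambda>U'. S \<union> U') ` Pow (T - S)" by blast
  qed (use T in auto)
  also have "(\<Sum>U\<in>(\<lambda>U'. S \<union> U') ` Pow (T - S). (-1::int) ^ (w - card U) * (if card U \<le> d - 2 then 1 else 0)) =
      (\<Sum>U'\<in>Pow (T - S). (-1::int) ^ (w - card (S \<union> U')) * (if card (S \<union> U') \<le> d - 2 then 1 else 0))"
    by (rule sum.reindex_cong[where l = "\<lambda>U'. S \<union> U'"]) (auto intro!: inj_onI)
  also have "\<dots> = (\<Sum>U'\<in>Pow (T - S). (-1::int) ^ (w - a - card U') * (if card U' \<le> d - 2 - a then 1 else 0))"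
  proof (intro sum.cong refl)
    fix U' assume U': "U' \<in> Pow (T - S)"
    hence "finite U'" using fT finite_subset by auto
    hence "card (S \<union> U') = a + card U'" using U' fS S by (subst card_Un_disjoint) auto
    thus "(-1::int) ^ (w - card (S \<union> U')) * (if card (S \<union> U') \<le> d - 2 then 1 else 0) =
          (-1::int) ^ (w - a - card U') * (if card U' \<le> d - 2 - a then 1 else 0)"
      using S by auto
  qed
  also have "\<dots> = (\<Sum>k\<le>card (T - S). int (card (T - S) choose k) * ((-1) ^ (w - a - k) * (if k \<le> d - 2 - a then 1 else 0)))"
    by (rule sum_pow_card) (use fT in auto)
  also have "card (T - S) = w - a" using T fS S cT by (simp add: card_Diff_subset)
  finally show ?thesis unfolding hh_def by simp
qed

lemma FF_closed:
  assumes S: "S \<subseteq> {..<q+1}" "card S = a" "a \<le> d - 2"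
  shows "FF S w = (if a \<le> w then int ((q + 1 - a) choose (w - a)) * hh (w - a) (d - 2 - a) else 0)"
proof -
  have "FF S w = (\<Sum>T\<in>Tw w. if S \<subseteq> T then hh (w - a) (d - 2 - a) else 0)"
    unfolding FF_def
  proof (intro sum.cong refl)
    fix T assume T: "T \<in> Tw w"
    show "(\<Sum>U\<in>Pow T. (-1) ^ (card T - card U) * (if card U \<le> d - 2 \<and> S \<subseteq> U then 1 else 0)) =
          (if S \<subseteq> T then hh (w - a) (d - 2 - a) else 0)"
    proof (cases "S \<subseteq> T")
      case True thus ?thesis using inner_closed[OF S(2,3) T] by simp
    next
      case False
      hence "\<And>U. U \<in> Pow T \<Longrightarrow> \<not> S \<subseteq> U" by auto
      thus ?thesis using False by simp
    qed
  qed
  also have "\<dots> = int (card {T\<in>Tw w. S \<subseteq> T}) * hh (w - a) (d - 2 - a)"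
    by (subst sum.If_cases) (simp_all add: finite_Tw Int_def)
  also have "{T\<in>Tw w. S \<subseteq> T} = {T. T \<subseteq> {..<q+1} \<and> card T = w \<and> S \<subseteq> T}" unfolding Tw_def by auto
  also have "card \<dots> = (if a \<le> w then (q + 1 - a) choose (w - a) else 0)"
    using card_supersets[of "{..<q+1}" S w] S by simp
  finally show ?thesis by simp
qed

end



lemma neg1pow_eq: "neg1pow (int a - int b) = (-1) ^ (a + b)"
proof -
  have "even (int a - int b) \<longleftrightarrow> even (a + b)"
  proof -
    have "even (int a - int b) \<longleftrightarrow> even (int a + int b)" by presburger
    thus ?thesis by simp
  qed
  thus ?thesis unfolding neg1pow_def by (simp add: minus_one_power_iff)
qed

lemma m1_par: "even (a + b) = even (c + e) \<Longrightarrow> (-1::int) ^ (a + b) = (-1) ^ (c + e)"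
  by (simp add: minus_one_power_iff)

context gd begin

definition GG :: "nat \<Rightarrow> nat \<Rightarrow> int" where
  "GG a w = (if a \<le> w then int ((q + 1 - a) choose (w - a)) * hh (w - a) (d - 2 - a) else 0)"

lemma FF_GG: "S \<subseteq> {..<q+1} \<Longrightarrow> card S \<le> d - 2 \<Longrightarrow> FF S w = GG (card S) w"
  unfolding GG_def using FF_closed by simp

lemma GG0:
  assumes "d - 1 \<le> w" "w \<le> q + 1"
  shows "GG 0 w = Omega0 q d w"
proof -
  have "GG 0 w = int ((q + 1) choose w) * hh w (d - 2)" unfolding GG_def by simp
  also have "hh w (d - 2) = (-1) ^ (w + (d - 2)) * int ((w - 1) choose (d - 2))"
    by (rule hh_closed) (use assms d5 in linarith)
  also have "(-1::int) ^ (w + (d - 2)) = (-1) ^ (w + d)" by (rule m1_par) (use d5 in auto)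
  finally show ?thesis unfolding Omega0_def neg1pow_eq by (simp add: algebra_simps)
qed

lemma GG2:
  assumes "d - 1 \<le> w" "w \<le> q + 1"
  shows "GG 2 w = Omega2 q d w"
proof -
  have a: "2 \<le> w" using assms d5 by linarith
  have "GG 2 w = int ((q + 1 - 2) choose (w - 2)) * hh (w - 2) (d - 2 - 2)" unfolding GG_def using a by simp
  also have "q + 1 - 2 = q - 1" by simp
  also have "d - 2 - 2 = d - 4" by simp
  also have "hh (w - 2) (d - 4) = (-1) ^ ((w - 2) + (d - 4)) * int ((w - 2 - 1) choose (d - 4))"
    by (rule hh_closed) (use assms d5 in linarith)
  also have "w - 2 - 1 = w - 3" by simp
  also have "(-1::int) ^ ((w - 2) + (d - 4)) = (-1) ^ (w + d)" by (rule m1_par) (use d5 a in auto)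
  finally show ?thesis unfolding Omega2_def neg1pow_eq by (simp add: algebra_simps)
qed

lemma GGd:
  assumes "d - 1 \<le> w" "w \<le> q + 1"
  shows "GG (d - 2) w = neg1pow (int w - int d) * int ((q + 3 - d) choose (q + 1 - w))"
proof -
  have a: "d - 2 \<le> w" using assms by linarith
  have "GG (d - 2) w = int ((q + 1 - (d - 2)) choose (w - (d - 2))) * hh (w - (d - 2)) (d - 2 - (d - 2))"
    unfolding GG_def using a by simp
  also have "d - 2 - (d - 2) = 0" by simp
  also have "hh (w - (d - 2)) 0 = (-1) ^ ((w - (d - 2)) + 0) * int ((w - (d - 2) - 1) choose 0)"
    by (rule hh_closed) (use assms d5 in linarith)
  also have "(-1::int) ^ ((w - (d - 2)) + 0) = (-1) ^ (w + d)" by (rule m1_par) (use d5 a in auto)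
  also have "q + 1 - (d - 2) = q + 3 - d" using d5 dq by linarith
  also have "(q + 3 - d) choose (w - (d - 2)) = (q + 3 - d) choose (q + 1 - w)"
  proof -
    have "(q + 3 - d) - (w - (d - 2)) = q + 1 - w" using assms d5 dq by linarith
    thus ?thesis using binomial_symmetric[of "w - (d - 2)" "q + 3 - d"] assms d5 dq by simp
  qed
  finally show ?thesis unfolding neg1pow_eq by (simp add: algebra_simps)
qed

end



locale gd2 = gd m d q for m :: "nat \<Rightarrow> 'a::{field,finite}" and d q +
  fixes j1 j2 :: nat and g1 g2 :: 'a
  assumes j12: "j1 < q + 1" "j2 < q + 1" "j1 \<noteq> j2" and g12: "g1 \<noteq> 0" "g2 \<noteq> 0"
begin

definition "vv = v2 j1 j2 g1 g2"
definition "VV = coset_of CC vv"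
definition "DD = {y \<in> VV. hw (q+1) y = d - 2}"

lemma vv_vecs: "vv \<in> vecs (q+1)"
  unfolding vv_def v2_def vecs_def using j12 by auto

lemma spt_vv: "spt vv = {j1, j2}"
  unfolding spt_def vv_def v2_def using j12 g12 by auto

lemma hw_vv: "hw (q+1) vv = 2"
  unfolding hw_spt spt_vv using j12 by simp

lemma vv_in: "vv \<in> VV" unfolding VV_def using coset_self[OF vv_vecs] .

lemma VV_vecs: "VV \<subseteq> vecs (q+1)" unfolding VV_def using coset_vecs[OF vv_vecs] .
lemma finite_VV: "finite VV" unfolding VV_def using finite_coset[OF vv_vecs] .

lemma VV_diff: "y \<in> VV \<Longrightarrow> (\<lambda>j. y j - vv j) \<in> CC"
  unfolding VV_def using coset_iff[OF vv_vecs] by auto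

lemma near_vv:
  assumes y: "y \<in> VV" and c: "card (spt y) + 3 \<le> d \<or> (card (spt y) + 2 \<le> d \<and> spt y \<inter> {j1, j2} \<noteq> {})"
  shows "y = vv"
proof -
  have c0: "(\<lambda>j. y j - vv j) \<in> CC" using VV_diff[OF y] .
  have s: "spt (\<lambda>j. y j - vv j) \<subseteq> spt y \<union> {j1, j2}" using spt_diff_sub[of y vv] spt_vv by auto
  have "card (spt y \<union> {j1, j2}) \<le> d - 1"
  proof (cases "card (spt y) + 3 \<le> d")
    case True
    have "card (spt y \<union> {j1, j2}) \<le> card (spt y) + card {j1, j2}" by (rule card_Un_le)
    also have "\<dots> \<le> card (spt y) + 2" by (simp add: card_insert_le_m1)
    finally show ?thesis using True d5 by linarith
  next
    case False
    hence cc: "card (spt y) + 2 \<le> d" "spt y \<inter> {j1, j2} \<noteq> {}" using c by auto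
    then obtain j where j: "j \<in> spt y" "j \<in> {j1, j2}" by auto
    then obtain j' where j': "{j1, j2} = {j, j'}" by auto
    have "spt y \<union> {j1, j2} = insert j' (spt y)" using j j' by auto
    hence "card (spt y \<union> {j1, j2}) \<le> card (spt y) + 1" by (simp add: card_insert_le_m1 card_insert_if)
    thus ?thesis using cc by linarith
  qed
  hence "(\<lambda>j. y j - vv j) = (\<lambda>j. 0)" using MDS_sub[OF c0 s] by simp
  thus "y = vv" by (auto simp: fun_eq_iff)
qed

lemma YY_VV: "YY VV = insert vv DD" and vv_DD: "vv \<notin> DD"
proof -
  have "d - 2 \<noteq> 2" using d5 by linarith
  thus "vv \<notin> DD" unfolding DD_def using hw_vv by simp
  show "YY VV = insert vv DD"
  proof (intro set_eqI iffI)
    fix y assume y: "y \<in> YY VV"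
    show "y \<in> insert vv DD"
    proof (cases "hw (q+1) y = d - 2")
      case True thus ?thesis using y unfolding YY_def DD_def by auto
    next
      case False
      hence "card (spt y) + 3 \<le> d" using y unfolding YY_def hw_spt by auto
      thus ?thesis using near_vv y unfolding YY_def by auto
    qed
  next
    fix y assume "y \<in> insert vv DD"
    thus "y \<in> YY VV" unfolding YY_def DD_def using vv_in hw_vv d5 by auto
  qed
qed

lemma finite_DD: "finite DD" unfolding DD_def using finite_VV by auto

lemma formula_VV:
  "int (B (q+1) w VV) = int (B (q+1) w CC) + GG 2 w + int (card DD) * GG (d - 2) w - GG 0 w"
proof -
  have "int (B (q+1) w VV) - int (B (q+1) w CC) = (\<Sum>y\<in>YY VV. FF (spt y) w) - FF {} w"
    using general_formula[OF vv_vecs] unfolding VV_def by simp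
  also have "(\<Sum>y\<in>YY VV. FF (spt y) w) = FF (spt vv) w + (\<Sum>y\<in>DD. FF (spt y) w)"
    unfolding YY_VV using vv_DD finite_DD by simp
  also have "FF (spt vv) w = GG 2 w"
  proof -
    have c2: "card (spt vv) = 2" using spt_vv j12 by simp
    have "FF (spt vv) w = GG (card (spt vv)) w" by (rule FF_GG) (use spt_sub c2 d5 in auto)
    thus ?thesis using c2 by simp
  qed
  also have "(\<Sum>y\<in>DD. FF (spt y) w) = (\<Sum>y\<in>DD. GG (d - 2) w)"
  proof (intro sum.cong refl)
    fix y assume "y \<in> DD"
    hence "card (spt y) = d - 2" unfolding DD_def hw_spt by simp
    thus "FF (spt y) w = GG (d - 2) w" using FF_GG[of "spt y" w] spt_sub by simp
  qed
  also have "FF {} w = GG 0 w" using FF_GG[of "{}" w] by simp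
  finally show ?thesis by simp
qed

lemma low_VV:
  assumes "w \<le> d - 2"
  shows "B (q+1) w VV = card {y \<in> insert vv DD. hw (q+1) y = w}"
proof -
  have "{x \<in> VV. hw (q+1) x = w} = {y \<in> YY VV. hw (q+1) y = w}" unfolding YY_def using assms by auto
  thus ?thesis unfolding B_def YY_VV by simp
qed

lemma B_low:
  "B (q+1) 2 VV = 1" "B (q+1) (d - 2) VV = card DD"
  "w \<le> d - 3 \<Longrightarrow> w \<noteq> 2 \<Longrightarrow> B (q+1) w VV = 0"
proof -
  have "{y \<in> insert vv DD. hw (q+1) y = 2} = {vv}" using hw_vv d5 unfolding DD_def by auto
  thus "B (q+1) 2 VV = 1" using low_VV[of 2] d5 by simp
  have "{y \<in> insert vv DD. hw (q+1) y = d - 2} = DD" using hw_vv d5 unfolding DD_def by auto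
  thus "B (q+1) (d - 2) VV = card DD" using low_VV[of "d - 2"] by simp
  assume a: "w \<le> d - 3" "w \<noteq> 2"
  have "B (q+1) w VV = card {y \<in> insert vv DD. hw (q+1) y = w}" using low_VV[of w] a by simp
  also have "{y \<in> insert vv DD. hw (q+1) y = w} = {}" using hw_vv d5 a unfolding DD_def by auto
  finally show "B (q+1) w VV = 0" by simp
qed

lemma DD_disj:
  assumes "y \<in> DD" shows "spt y \<inter> {j1, j2} = {}"
proof (rule ccontr)
  assume a: "spt y \<inter> {j1, j2} \<noteq> {}"
  have "card (spt y) = d - 2" using assms unfolding DD_def hw_spt by simp
  hence "y = vv" using near_vv[of y] a assms d5 unfolding DD_def by auto
  thus False using assms vv_DD by simp
qed

end



context gd2 begin

definition "NN2 = {..<q+1} - {j1, j2}"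
definition "Ssets = {S. S \<subseteq> NN2 \<and> card S = d - 2}"
definition "aa k = (if j1 < q then m j1 - m k else 1)"
definition "bb k = (if j2 < q then m j2 - m k else 1)"
definition "phi k = (if k < q then aa k / bb k else 1)"

lemma aa_nz: "k < q \<Longrightarrow> k \<noteq> j1 \<Longrightarrow> aa k \<noteq> 0"
  unfolding aa_def using m_inj[of j1 k] by auto
lemma bb_nz: "k < q \<Longrightarrow> k \<noteq> j2 \<Longrightarrow> bb k \<noteq> 0"
  unfolding bb_def using m_inj[of j2 k] by auto

lemma key:
  assumes c: "c \<in> CC" and S: "S \<in> Ssets" and sc: "spt c \<subseteq> S \<union> {j1, j2}"
  shows "(\<Prod>k\<in>S \<inter> {..<q}. aa k) * c j1 + (\<Prod>k\<in>S \<inter> {..<q}. bb k) * c j2 = 0"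
proof -
  have SN: "S \<subseteq> NN2" "card S = d - 2" using S unfolding Ssets_def by auto
  have fS: "finite S" using SN unfolding NN2_def using finite_subset by auto
  let ?A = "S \<inter> {..<q}"
  let ?p = "lin ?A"
  have fA: "finite ?A" using fS by auto
  have dA: "degree ?p = card ?A" using lin_degree[OF fA] .
  have cA: "card ?A \<le> d - 2" using card_mono[OF fS, of ?A] SN by auto
  have CP: "(\<Sum>j<q. poly ?p (m j) * c j) + coeff ?p (d-2) * c q = 0"
    by (rule CC_poly[OF c]) (use dA cA in simp)
  have cv: "c \<in> vecs (q+1)" using c CC_iff by auto
  have zero_out: "c j = 0" if "j < q + 1" "j \<notin> S" "j \<notin> {j1, j2}" for j
    using sc that unfolding spt_def by auto
  have sumq: "(\<Sum>j<q. poly ?p (m j) * c j) = (\<Sum>j\<in>{..<q} \<inter> {j1, j2}. poly ?p (m j) * c j)"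
  proof (rule sum.mono_neutral_right)
    show "\<forall>j\<in>{..<q} - {..<q} \<inter> {j1, j2}. poly ?p (m j) * c j = 0"
    proof
      fix j assume j: "j \<in> {..<q} - {..<q} \<inter> {j1, j2}"
      show "poly ?p (m j) * c j = 0"
      proof (cases "j \<in> S")
        case True
        hence "j \<in> ?A" using j by auto
        thus ?thesis using fA by (auto simp: lin_poly prod_zero_iff)
      next
        case False thus ?thesis using zero_out[of j] j by auto
      qed
    qed
  qed auto
  have pj: "poly ?p (m j) = (\<Prod>k\<in>?A. m j - m k)" for j using lin_poly[OF fA] .
  show ?thesis
  proof (cases "j1 < q \<and> j2 < q")
    case True
    have co: "coeff ?p (d-2) * c q = 0"
    proof (cases "q \<in> S")
      case True
      have "?A \<subseteq> S - {q}" by auto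
      hence "card ?A \<le> card (S - {q})" using fS by (intro card_mono) auto
      also have "\<dots> = d - 3" using True SN fS by simp
      finally have "degree ?p < d - 2" using dA d5 by linarith
      thus ?thesis by (simp add: coeff_eq_0)
    next
      case False
      hence "c q = 0" using zero_out[of q] True by auto
      thus ?thesis by simp
    qed
    have "{..<q} \<inter> {j1, j2} = {j1, j2}" using True by auto
    hence "(\<Sum>j<q. poly ?p (m j) * c j) = poly ?p (m j1) * c j1 + poly ?p (m j2) * c j2"
      using sumq j12 by simp
    thus ?thesis using CP co True unfolding aa_def bb_def pj by simp
  next
    case False
    hence qS: "q \<notin> S" using SN j12 unfolding NN2_def by auto
    hence AS: "?A = S" using SN unfolding NN2_def by (auto simp: less_Suc_eq)
    have co: "coeff ?p (d-2) = 1"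
      using lin_lead[of ?A] dA AS SN by simp
    show ?thesis
    proof (cases "j1 < q")
      case True
      hence j2q: "j2 = q" using False j12 by auto
      have "{..<q} \<inter> {j1, j2} = {j1}" using True j2q by auto
      hence "(\<Sum>j<q. poly ?p (m j) * c j) = poly ?p (m j1) * c j1" using sumq by simp
      thus ?thesis using CP co True j2q unfolding aa_def bb_def pj by simp
    next
      case False
      hence j1q: "j1 = q" using j12 by auto
      hence j2q: "j2 < q" using j12 by auto
      have "{..<q} \<inter> {j1, j2} = {j2}" using j1q j2q by auto
      hence "(\<Sum>j<q. poly ?p (m j) * c j) = poly ?p (m j2) * c j2" using sumq by simp
      thus ?thesis using CP co j1q j2q unfolding aa_def bb_def pj by (simp add: algebra_simps)
    qed
  qed
qed

lemma prod_aa_nz: "S \<subseteq> NN2 \<Longrightarrow> (\<Prod>k\<in>S \<inter> {..<q}. aa k) \<noteq> 0"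
  using aa_nz unfolding NN2_def by (auto simp: prod_zero_iff finite_subset)
lemma prod_bb_nz: "S \<subseteq> NN2 \<Longrightarrow> (\<Prod>k\<in>S \<inter> {..<q}. bb k) \<noteq> 0"
  using bb_nz unfolding NN2_def by (auto simp: prod_zero_iff finite_subset)

lemma prod_phi: "finite S \<Longrightarrow> (\<Prod>k\<in>S. phi k) = (\<Prod>k\<in>S \<inter> {..<q}. aa k) / (\<Prod>k\<in>S \<inter> {..<q}. bb k)"
proof -
  assume fS: "finite S"
  have "(\<Prod>k\<in>S. phi k) = (\<Prod>k\<in>S \<inter> {..<q}. phi k)"
    by (rule prod.mono_neutral_right) (use fS in \<open>auto simp: phi_def\<close>)
  also have "\<dots> = (\<Prod>k\<in>S \<inter> {..<q}. aa k / bb k)" by (intro prod.cong) (auto simp: phi_def)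
  finally show ?thesis by (simp add: prod_dividef)
qed

lemma DD_nec:
  assumes y: "y \<in> DD"
  shows "spt y \<in> Ssets \<and> (\<Prod>k\<in>spt y. phi k) = - g2 / g1"
proof -
  have yV: "y \<in> VV" and hy: "card (spt y) = d - 2" using y unfolding DD_def hw_spt by auto
  have dis: "spt y \<inter> {j1, j2} = {}" using DD_disj[OF y] .
  have S: "spt y \<in> Ssets" unfolding Ssets_def NN2_def using hy dis spt_sub by auto
  let ?c = "\<lambda>j. y j - vv j"
  have c: "?c \<in> CC" using VV_diff[OF yV] .
  have sc: "spt ?c \<subseteq> spt y \<union> {j1, j2}" using spt_diff_sub[of y vv] spt_vv by auto
  have y1: "y j1 = 0" "y j2 = 0" using dis j12 unfolding spt_def by auto
  have c1: "?c j1 = - g1" "?c j2 = - g2" using y1 j12 unfolding vv_def v2_def by auto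
  have K: "(\<Prod>k\<in>spt y \<inter> {..<q}. aa k) * (- g1) + (\<Prod>k\<in>spt y \<inter> {..<q}. bb k) * (- g2) = 0"
    using key[OF c S sc] c1 by simp
  have SN: "spt y \<subseteq> NN2" using S unfolding Ssets_def by auto
  have nz: "(\<Prod>k\<in>spt y \<inter> {..<q}. bb k) \<noteq> 0" using prod_bb_nz[OF SN] .
  have "(\<Prod>k\<in>spt y \<inter> {..<q}. aa k) * g1 = - ((\<Prod>k\<in>spt y \<inter> {..<q}. bb k) * g2)"
    using K by (simp add: add_eq_0_iff2) (metis minus_minus)
  hence "(\<Prod>k\<in>spt y \<inter> {..<q}. aa k) = (- g2 / g1) * (\<Prod>k\<in>spt y \<inter> {..<q}. bb k)"
    using g12 by (simp add: field_simps)
  hence "(\<Prod>k\<in>spt y \<inter> {..<q}. aa k) / (\<Prod>k\<in>spt y \<inter> {..<q}. bb k) = - g2 / g1"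
    using nz by simp
  thus ?thesis using S prod_phi by simp
qed

lemma CC_smult: "c \<in> CC \<Longrightarrow> (\<lambda>j. a * c j) \<in> CC"
proof -
  assume c: "c \<in> CC"
  have "row i (\<lambda>j. a * c j) = a * row i c" for i
    unfolding row_def by (simp add: sum_distrib_left algebra_simps)
  thus ?thesis using c unfolding CC_iff vecs_def by auto
qed

lemma exists_nz_codeword:
  assumes U: "U \<subseteq> {..<q+1}" "card U = d"
  shows "\<exists>c \<in> CC. c \<noteq> (\<lambda>j. 0) \<and> spt c \<subseteq> U"
proof -
  have fU: "finite U" using U finite_subset by auto
  let ?S = "sup_on U :: (nat \<Rightarrow> 'a) set"
  have Sv: "?S \<subseteq> vecs (q+1)" using U unfolding vecs_sup sup_on_def by auto
  have sub: "syn ` ?S \<subseteq> sup_on {..<d-1}" unfolding syn_def sup_on_def by auto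
  have c2: "card (sup_on {..<d-1} :: (nat \<Rightarrow> 'a) set) = q ^ (d-1)"
    using card_sup_on[of "{..<d-1}"] qdef by simp
  have c1: "card ?S = q ^ d" using card_sup_on[OF fU] U qdef by simp
  have "q ^ (d - 1) < q ^ d" using dq d5 by (intro power_strict_increasing) auto
  hence "\<not> inj_on syn ?S"
    using card_mono[OF finite_sup_on sub] c1 c2 card_image by fastforce
  then obtain x y where xy: "x \<in> ?S" "y \<in> ?S" "syn x = syn y" "x \<noteq> y" unfolding inj_on_def by auto
  have xv: "x \<in> vecs (q+1)" "y \<in> vecs (q+1)" using xy Sv by auto
  have c: "(\<lambda>j. x j - y j) \<in> CC" using syn_eq[OF xv] xy by auto
  moreover have "(\<lambda>j. x j - y j) \<noteq> (\<lambda>j. 0)" using xy by (auto simp: fun_eq_iff)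
  moreover have "spt x \<subseteq> U" "spt y \<subseteq> U" using spt_sup[OF xv(1)] spt_sup[OF xv(2)] xy by auto
  hence "spt (\<lambda>j. x j - y j) \<subseteq> U" using spt_diff_sub[of x y] by blast
  ultimately show ?thesis by blast
qed

lemma DD_suff:
  assumes S: "S \<in> Ssets" and P: "(\<Prod>k\<in>S. phi k) = - g2 / g1"
  shows "\<exists>y\<in>DD. spt y = S"
proof -
  have SN: "S \<subseteq> NN2" "card S = d - 2" using S unfolding Ssets_def by auto
  have fS: "finite S" using SN unfolding NN2_def using finite_subset by auto
  let ?U = "S \<union> {j1, j2}"
  have dj: "S \<inter> {j1, j2} = {}" using SN unfolding NN2_def by auto
  have cU: "card ?U = d" using card_Un_disjoint[OF fS _ dj] SN j12 d5 by simp
  have U: "?U \<subseteq> {..<q+1}" using SN j12 unfolding NN2_def by auto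
  obtain c0 where c0: "c0 \<in> CC" "c0 \<noteq> (\<lambda>j. 0)" "spt c0 \<subseteq> ?U" using exists_nz_codeword[OF U cU] by auto
  have full: "spt c0 = ?U"
  proof (rule ccontr)
    assume "spt c0 \<noteq> ?U"
    hence "spt c0 \<subset> ?U" using c0 by auto
    hence "card (spt c0) < d" using cU psubset_card_mono[of ?U] fS by auto
    hence "card (spt c0) \<le> d - 1" by linarith
    thus False using MDS[OF c0(1)] c0(2) by blast
  qed
  hence c01: "c0 j1 \<noteq> 0" unfolding spt_def by auto
  have K: "(\<Prod>k\<in>S \<inter> {..<q}. aa k) * c0 j1 + (\<Prod>k\<in>S \<inter> {..<q}. bb k) * c0 j2 = 0"
    using key[OF c0(1) S c0(3)] .
  have r: "(\<Prod>k\<in>S \<inter> {..<q}. aa k) / (\<Prod>k\<in>S \<inter> {..<q}. bb k) = - g2 / g1" using P prod_phi[OF fS] by simp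
  have nzb: "(\<Prod>k\<in>S \<inter> {..<q}. bb k) \<noteq> 0" using prod_bb_nz[OF SN(1)] .
  have c02: "c0 j2 = g2 / g1 * c0 j1"
  proof -
    have "(\<Prod>k\<in>S \<inter> {..<q}. aa k) * c0 j1 = - ((\<Prod>k\<in>S \<inter> {..<q}. bb k) * c0 j2)"
      using K by (simp add: add_eq_0_iff2)
    hence "c0 j2 = - ((\<Prod>k\<in>S \<inter> {..<q}. aa k) / (\<Prod>k\<in>S \<inter> {..<q}. bb k)) * c0 j1"
      using nzb by (simp add: field_simps)
    thus ?thesis using r by simp
  qed
  define c where "c = (\<lambda>j. (- g1 / c0 j1) * c0 j)"
  have cC: "c \<in> CC" unfolding c_def by (rule CC_smult[OF c0(1)])
  have nzs: "- g1 / c0 j1 \<noteq> 0" using g12 c01 by simp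
  have cj1: "c j1 = - g1" unfolding c_def using c01 by simp
  have cj2: "c j2 = - g2" unfolding c_def using c01 g12 c02 by (simp add: field_simps)
  define y where "y = (\<lambda>j. vv j + c j)"
  have yV: "y \<in> VV" unfolding y_def VV_def coset_of_def using cC by auto
  have vj: "vv j1 = g1" "vv j2 = g2" "\<And>j. j \<noteq> j1 \<Longrightarrow> j \<noteq> j2 \<Longrightarrow> vv j = 0"
    unfolding vv_def v2_def using j12 by auto
  have sy: "spt y = S"
  proof (intro set_eqI iffI)
    fix j assume j: "j \<in> spt y"
    hence jn: "j < q + 1" "y j \<noteq> 0" unfolding spt_def by auto
    have "j \<noteq> j1" using jn cj1 vj unfolding y_def by auto
    moreover have "j \<noteq> j2" using jn cj2 vj unfolding y_def by auto
    ultimately have "c j \<noteq> 0" using jn vj unfolding y_def by auto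
    hence "c0 j \<noteq> 0" unfolding c_def by auto
    hence "j \<in> ?U" using full jn unfolding spt_def by auto
    thus "j \<in> S" using \<open>j \<noteq> j1\<close> \<open>j \<noteq> j2\<close> by auto
  next
    fix j assume j: "j \<in> S"
    hence "j \<in> spt c0" "j \<noteq> j1" "j \<noteq> j2" using full dj by auto
    hence "j < q + 1" "c0 j \<noteq> 0" unfolding spt_def by auto
    hence "y j \<noteq> 0" unfolding y_def c_def using vj \<open>j \<noteq> j1\<close> \<open>j \<noteq> j2\<close> nzs by auto
    thus "j \<in> spt y" using \<open>j < q + 1\<close> unfolding spt_def by auto
  qed
  have "y \<in> DD" unfolding DD_def hw_spt using yV sy SN by auto
  thus ?thesis using sy by auto
qed

end



context gd2 begin

lemma card_DD_Ssets: "card DD = card {S \<in> Ssets. (\<Prod>k\<in>S. phi k) = - g2 / g1}"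
proof -
  have inj: "inj_on spt DD"
  proof (rule inj_onI)
    fix y y' assume y: "y \<in> DD" and y': "y' \<in> DD" and e: "spt y = spt y'"
    have c: "(\<lambda>j. (y j - vv j) - (y' j - vv j)) \<in> CC"
      using CC_diff[OF VV_diff VV_diff] y y' unfolding DD_def by auto
    have "(\<lambda>j. (y j - vv j) - (y' j - vv j)) = (\<lambda>j. y j - y' j)" by auto
    hence c': "(\<lambda>j. y j - y' j) \<in> CC" using c by simp
    have "spt (\<lambda>j. y j - y' j) \<subseteq> spt y" using spt_diff_sub[of y y'] e by auto
    moreover have "card (spt y) \<le> d - 1" using y unfolding DD_def hw_spt by auto
    ultimately have "(\<lambda>j. y j - y' j) = (\<lambda>j. 0)" using MDS_sub[OF c'] by simp
    thus "y = y'" by (auto simp: fun_eq_iff)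
  qed
  have "spt ` DD = {S \<in> Ssets. (\<Prod>k\<in>S. phi k) = - g2 / g1}"
  proof (intro set_eqI iffI)
    fix S assume "S \<in> spt ` DD"
    thus "S \<in> {S \<in> Ssets. (\<Prod>k\<in>S. phi k) = - g2 / g1}" using DD_nec by auto
  next
    fix S assume "S \<in> {S \<in> Ssets. (\<Prod>k\<in>S. phi k) = - g2 / g1}"
    thus "S \<in> spt ` DD" using DD_suff by force
  qed
  thus ?thesis using card_image[OF inj] by simp
qed

lemma phi_nz: "k \<in> NN2 \<Longrightarrow> phi k \<noteq> 0"
  unfolding phi_def NN2_def using aa_nz bb_nz by auto

lemma phi_inj: "inj_on phi NN2"
proof (rule inj_onI)
  fix k k' assume k: "k \<in> NN2" and k': "k' \<in> NN2" and e: "phi k = phi k'"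
  have kk: "k < q + 1" "k \<noteq> j1" "k \<noteq> j2" "k' < q + 1" "k' \<noteq> j1" "k' \<noteq> j2" using k k' unfolding NN2_def by auto
  have AB: "j1 < q \<Longrightarrow> j2 < q \<Longrightarrow> m j1 \<noteq> m j2" using m_inj j12 by blast
  show "k = k'"
  proof (cases "k < q \<and> k' < q")
    case True
    have nz: "bb k \<noteq> 0" "bb k' \<noteq> 0" using bb_nz True kk by auto
    have e2: "aa k * bb k' = aa k' * bb k" using e True nz unfolding phi_def by (simp add: frac_eq_eq)
    have "m k = m k'"
    proof (cases "j1 < q \<and> j2 < q")
      case True
      have "(m j1 - m j2) * (m k - m k') = (m j1 - m k) * (m j2 - m k') - (m j1 - m k') * (m j2 - m k)"
        by (simp add: algebra_simps)
      also have "\<dots> = 0" using e2 True unfolding aa_def bb_def by simp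
      finally show ?thesis using AB True by simp
    next
      case False
      show ?thesis
      proof (cases "j1 < q")
        case True
        hence "j2 = q" using False j12 by auto
        thus ?thesis using e2 True unfolding aa_def bb_def by simp
      next
        case False
        hence "j1 = q" "j2 < q" using j12 by auto
        thus ?thesis using e2 unfolding aa_def bb_def by simp
      qed
    qed
    thus ?thesis using m_inj True by blast
  next
    case False
    show ?thesis
    proof (rule ccontr)
      assume ne: "k \<noteq> k'"
      have "k = q \<or> k' = q" using False kk by auto
      hence "q \<in> NN2" using k k' by auto
      hence jq: "j1 < q" "j2 < q" using j12 unfolding NN2_def by auto
      obtain a where a: "a \<in> {k, k'}" "a < q" "phi a = 1"
      proof (cases "k = q")
        case True
        hence "k' < q" using ne kk by auto
        thus ?thesis using that[of k'] e True unfolding phi_def by auto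
      next
        case False
        hence "k < q" "k' = q" using \<open>k = q \<or> k' = q\<close> kk by auto
        thus ?thesis using that[of k] e unfolding phi_def by auto
      qed
      have "a \<noteq> j2" using a kk by auto
      hence "bb a \<noteq> 0" using bb_nz a by auto
      hence "aa a = bb a" using a unfolding phi_def by (simp add: divide_eq_eq)
      hence "m j1 = m j2" using jq unfolding aa_def bb_def by simp
      thus False using AB jq by simp
    qed
  qed
qed

lemma card_NN2: "card NN2 = q - 1"
  unfolding NN2_def using j12 by (simp add: card_Diff_subset)

lemma phi_img: "phi ` NN2 = UNIV - {0}"
proof -
  have sub: "phi ` NN2 \<subseteq> UNIV - {0}" using phi_nz by auto
  have "card (UNIV - {0::'a}) = q - 1" using qdef by (simp add: card_Diff_subset)
  hence "card (phi ` NN2) = card (UNIV - {0::'a})" using card_image[OF phi_inj] card_NN2 by simp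
  thus ?thesis using card_subset_eq[OF _ sub] by simp
qed

lemma card_DD: "card DD = Ptimes (d - 2) (- g2 / g1)"
proof -
  let ?g = "- g2 / g1"
  have inj: "inj_on (\<lambda>S. phi ` S) {S \<in> Ssets. (\<Prod>k\<in>S. phi k) = ?g}"
  proof (rule inj_onI)
    fix S S' assume "S \<in> {S \<in> Ssets. (\<Prod>k\<in>S. phi k) = ?g}" "S' \<in> {S \<in> Ssets. (\<Prod>k\<in>S. phi k) = ?g}"
      and e: "phi ` S = phi ` S'"
    hence "S \<subseteq> NN2" "S' \<subseteq> NN2" unfolding Ssets_def by auto
    thus "S = S'" using inj_on_image_eq_iff[OF phi_inj] e by blast
  qed
  have img: "(\<lambda>S. phi ` S) ` {S \<in> Ssets. (\<Prod>k\<in>S. phi k) = ?g} = {A. 0 \<notin> A \<and> card A = d - 2 \<and> \<Prod>A = ?g}"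
  proof (intro set_eqI iffI)
    fix A assume "A \<in> (\<lambda>S. phi ` S) ` {S \<in> Ssets. (\<Prod>k\<in>S. phi k) = ?g}"
    then obtain S where S: "S \<in> Ssets" "(\<Prod>k\<in>S. phi k) = ?g" "A = phi ` S" by auto
    have SN: "S \<subseteq> NN2" "card S = d - 2" using S unfolding Ssets_def by auto
    have ij: "inj_on phi S" using inj_on_subset[OF phi_inj SN(1)] .
    have "0 \<notin> A" using S SN phi_nz by auto
    moreover have "card A = d - 2" using card_image[OF ij] S SN by simp
    moreover have "\<Prod>A = ?g" using prod.reindex[OF ij, of id] S by simp
    ultimately show "A \<in> {A. 0 \<notin> A \<and> card A = d - 2 \<and> \<Prod>A = ?g}" by simp
  next
    fix A :: "'a set" assume A: "A \<in> {A. 0 \<notin> A \<and> card A = d - 2 \<and> \<Prod>A = ?g}"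
    let ?S = "{k \<in> NN2. phi k \<in> A}"
    have AS: "phi ` ?S = A" using A phi_img by auto
    have ij: "inj_on phi ?S" using inj_on_subset[OF phi_inj] by auto
    have "card ?S = d - 2" using card_image[OF ij] AS A by simp
    hence "?S \<in> Ssets" unfolding Ssets_def by auto
    moreover have "(\<Prod>k\<in>?S. phi k) = ?g" using prod.reindex[OF ij, of id] AS A by simp
    ultimately show "A \<in> (\<lambda>S. phi ` S) ` {S \<in> Ssets. (\<Prod>k\<in>S. phi k) = ?g}" using AS by blast
  qed
  show ?thesis unfolding card_DD_Ssets Ptimes_def using card_image[OF inj] img by simp
qed

end



lemma fermat:
  fixes x :: "'a::{field,finite}"
  assumes "x \<noteq> 0"
  shows "x ^ (card (UNIV::'a set) - 1) = 1"
proof -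
  let ?F = "UNIV - {0::'a}"
  have inj: "inj_on ((*) x) ?F" using assms by (auto intro!: inj_onI)
  have img: "(*) x ` ?F = ?F"
  proof (intro set_eqI iffI)
    fix y assume "y \<in> ?F"
    hence "y = x * (y / x)" "y / x \<in> ?F" using assms by auto
    thus "y \<in> (*) x ` ?F" by blast
  qed (use assms in auto)
  have "(\<Prod>y\<in>?F. y) = (\<Prod>y\<in>(*) x ` ?F. y)" using img by simp
  also have "\<dots> = (\<Prod>y\<in>?F. x * y)" using prod.reindex[OF inj, of id] by simp
  also have "\<dots> = x ^ card ?F * (\<Prod>y\<in>?F. y)" by (simp add: prod.distrib)
  finally have "x ^ card ?F = 1" by (simp add: prod_zero_iff)
  moreover have "card ?F = card (UNIV::'a set) - 1" by (simp add: card_Diff_subset)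
  ultimately show ?thesis by simp
qed

locale primel =
  fixes \<beta> :: "'a::{field,finite}" and q :: nat
  assumes qdef: "q = card (UNIV::'a set)" and q3: "3 \<le> q"
    and prim: "\<forall>x::'a. x \<noteq> 0 \<longrightarrow> (\<exists>k::nat. \<beta> ^ k = x)"
begin

lemma beta_nz: "\<beta> \<noteq> 0"
proof
  assume b: "\<beta> = 0"
  have "card ({0, 1} :: 'a set) < card (UNIV :: 'a set)" using q3 qdef card_insert_le[of "{1::'a}" 0] by auto
  have "{0, 1} \<noteq> (UNIV :: 'a set)"
  proof
    assume e: "{0, 1} = (UNIV :: 'a set)"
    have "card ({0, 1} :: 'a set) < card ({0, 1} :: 'a set)"
      using \<open>card ({0, 1} :: 'a set) < card (UNIV :: 'a set)\<close> by (subst (2) e)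
    thus False by simp
  qed
  then obtain x :: 'a where x: "x \<noteq> 0" "x \<noteq> 1" by auto
  then obtain k where "\<beta> ^ k = x" using prim by auto
  thus False using b x by (cases k) auto
qed

lemma beta_q1: "\<beta> ^ (q - 1) = 1" using fermat[OF beta_nz] qdef by simp

lemma beta_mod: "\<beta> ^ k = \<beta> ^ (k mod (q - 1))"
proof -
  have "\<beta> ^ k = \<beta> ^ ((q - 1) * (k div (q - 1)) + k mod (q - 1))"
    by (metis div_mult_mod_eq mult.commute)
  also have "\<dots> = (\<beta> ^ (q - 1)) ^ (k div (q - 1)) * \<beta> ^ (k mod (q - 1))"
    by (simp only: power_add power_mult)
  also have "\<dots> = \<beta> ^ (k mod (q - 1))" by (simp only: beta_q1 power_one mult_1)
  finally show ?thesis .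
qed

lemma beta_img: "(\<lambda>k. \<beta> ^ k) ` {..<q-1} = UNIV - {0}"
proof (intro set_eqI iffI)
  fix x :: 'a assume "x \<in> UNIV - {0}"
  then obtain k where "\<beta> ^ k = x" using prim by auto
  hence "x = \<beta> ^ (k mod (q - 1))" using beta_mod by simp
  moreover have "k mod (q - 1) < q - 1" using q3 by simp
  ultimately show "x \<in> (\<lambda>k. \<beta> ^ k) ` {..<q-1}" by auto
qed (use beta_nz in auto)

lemma beta_inj: "inj_on (\<lambda>k. \<beta> ^ k) {..<q-1}"
proof (rule eq_card_imp_inj_on)
  show "card ((\<lambda>k. \<beta> ^ k) ` {..<q-1}) = card {..<q-1}"
    unfolding beta_img using qdef by (simp add: card_Diff_subset)
qed simp

lemma beta_eq: "\<beta> ^ a = \<beta> ^ b \<longleftrightarrow> a mod (q - 1) = b mod (q - 1)"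
proof
  assume "\<beta> ^ a = \<beta> ^ b"
  hence "\<beta> ^ (a mod (q - 1)) = \<beta> ^ (b mod (q - 1))" using beta_mod by metis
  moreover have "a mod (q - 1) \<in> {..<q-1}" "b mod (q - 1) \<in> {..<q-1}" using q3 by auto
  ultimately show "a mod (q - 1) = b mod (q - 1)" using beta_inj unfolding inj_on_def by blast
next
  assume "a mod (q - 1) = b mod (q - 1)"
  thus "\<beta> ^ a = \<beta> ^ b" using beta_mod by metis
qed

lemma Pplus_Ptimes:
  assumes l: "l < q - 1"
  shows "Pplus (q - 1) \<mu> l = Ptimes \<mu> (\<beta> ^ l)"
proof -
  let ?f = "\<lambda>k. \<beta> ^ k"
  let ?L = "{S. S \<subseteq> {..<q-1} \<and> card S = \<mu> \<and> (\<Sum>S) mod (q - 1) = l}"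
  let ?R = "{A. 0 \<notin> A \<and> card A = \<mu> \<and> \<Prod>A = \<beta> ^ l}"
  have prodS: "\<Prod>(?f ` S) = \<beta> ^ (\<Sum>S)" if "S \<subseteq> {..<q-1}" for S
  proof -
    have ij: "inj_on ?f S" using inj_on_subset[OF beta_inj that] .
    have "\<Prod>(?f ` S) = (\<Prod>k\<in>S. \<beta> ^ k)" using prod.reindex[OF ij, of id] by simp
    also have "\<dots> = \<beta> ^ (\<Sum>S)" by (simp add: power_sum)
    finally show ?thesis .
  qed
  have lm: "l mod (q - 1) = l" using l by simp
  have inj: "inj_on (\<lambda>S. ?f ` S) ?L"
  proof (rule inj_onI)
    fix S S' assume "S \<in> ?L" "S' \<in> ?L" "?f ` S = ?f ` S'"
    thus "S = S'" using inj_on_image_eq_iff[OF beta_inj] by blast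
  qed
  have img: "(\<lambda>S. ?f ` S) ` ?L = ?R"
  proof (intro set_eqI iffI)
    fix A assume "A \<in> (\<lambda>S. ?f ` S) ` ?L"
    then obtain S where S: "S \<in> ?L" "A = ?f ` S" by auto
    have ij: "inj_on ?f S" using inj_on_subset[OF beta_inj] S by auto
    have "0 \<notin> A" using S beta_nz by auto
    moreover have "card A = \<mu>" using S card_image[OF ij] by simp
    moreover have "\<Prod>A = \<beta> ^ l" using S prodS[of S] beta_eq lm by auto
    ultimately show "A \<in> ?R" by simp
  next
    fix A :: "'a set" assume A: "A \<in> ?R"
    let ?S = "{k \<in> {..<q-1}. ?f k \<in> A}"
    have AS: "?f ` ?S = A" using A beta_img by auto
    have ij: "inj_on ?f ?S" by (rule inj_on_subset[OF beta_inj]) auto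
    have "card ?S = \<mu>" using card_image[OF ij] AS A by simp
    moreover have "(\<Sum>?S) mod (q - 1) = l"
    proof -
      have "?S \<subseteq> {..<q-1}" by auto
      hence "\<Prod>(?f ` ?S) = \<beta> ^ (\<Sum>?S)" by (rule prodS)
      hence "\<beta> ^ (\<Sum>?S) = \<beta> ^ l" using AS A by simp
      thus ?thesis using beta_eq lm by simp
    qed
    ultimately have "?S \<in> ?L" by auto
    thus "A \<in> (\<lambda>S. ?f ` S) ` ?L" using AS by blast
  qed
  show ?thesis unfolding Pplus_def Ptimes_def using card_image[OF inj] img by simp
qed

end



lemma Pplus_sum:
  assumes "0 < R"
  shows "(\<Sum>l<R. Pplus R \<mu> l) = R choose \<mu>"
proof -
  let ?X = "{S. S \<subseteq> {..<R} \<and> card S = \<mu>}"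
  have fX: "finite ?X" by (rule finite_subset[of _ "Pow {..<R}"]) auto
  have "card ?X = (\<Sum>l<R. card {S \<in> ?X. (\<Sum>S) mod R = l})"
    by (rule card_group[OF fX]) (use assms in auto)
  also have "\<dots> = (\<Sum>l<R. Pplus R \<mu> l)" unfolding Pplus_def by (intro sum.cong refl arg_cong[where f=card]) auto
  finally show ?thesis using n_subsets[of "{..<R}" \<mu>] by simp
qed

lemma Pplus_shift_le:
  assumes R: "0 < R"
  shows "Pplus R \<mu> l \<le> Pplus R \<mu> ((l + \<mu>) mod R)"
proof -
  let ?s = "\<lambda>x. (x + 1) mod R"
  let ?L1 = "{S. S \<subseteq> {..<R} \<and> card S = \<mu> \<and> (\<Sum>S) mod R = l}"
  let ?L2 = "{S. S \<subseteq> {..<R} \<and> card S = \<mu> \<and> (\<Sum>S) mod R = (l + \<mu>) mod R}"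
  have sinj: "inj_on ?s {..<R}"
  proof (rule inj_onI)
    fix x y assume "x \<in> {..<R}" "y \<in> {..<R}" "(x + 1) mod R = (y + 1) mod R"
    thus "x = y" by (cases "x + 1 = R"; cases "y + 1 = R") auto
  qed
  have inj: "inj_on (\<lambda>S. ?s ` S) ?L1"
  proof (rule inj_onI)
    fix S S' assume "S \<in> ?L1" "S' \<in> ?L1" "?s ` S = ?s ` S'"
    thus "S = S'" using inj_on_image_eq_iff[OF sinj] by blast
  qed
  have into: "(\<lambda>S. ?s ` S) ` ?L1 \<subseteq> ?L2"
  proof
    fix A assume "A \<in> (\<lambda>S. ?s ` S) ` ?L1"
    then obtain S where S: "S \<in> ?L1" "A = ?s ` S" by auto
    have ij: "inj_on ?s S" using inj_on_subset[OF sinj] S by auto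
    have fS: "finite S" using S finite_subset by auto
    have "A \<subseteq> {..<R}" using S R by auto
    moreover have "card A = \<mu>" using card_image[OF ij] S by simp
    moreover have "(\<Sum>A) mod R = (l + \<mu>) mod R"
    proof -
      have "\<Sum>A = (\<Sum>x\<in>S. (x + 1) mod R)" using sum.reindex[OF ij, of id] S by simp
      hence "(\<Sum>A) mod R = (\<Sum>x\<in>S. x + 1) mod R" by (simp add: mod_sum_eq)
      also have "(\<Sum>x\<in>S. x + 1) = \<Sum>S + card S" by (simp only: sum.distrib) simp
      also have "(\<Sum>S + card S) mod R = ((\<Sum>S) mod R + card S) mod R" by (simp add: mod_add_left_eq)
      finally show ?thesis using S by simp
    qed
    ultimately show "A \<in> ?L2" by simp
  qed
  have fL2: "finite ?L2" by (rule finite_subset[of _ "Pow {..<R}"]) auto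
  show ?thesis unfolding Pplus_def using card_inj_on_le[OF inj into fL2] .
qed

lemma Pplus_iter_le:
  assumes R: "0 < R"
  shows "Pplus R \<mu> l \<le> Pplus R \<mu> ((l + k * \<mu>) mod R)"
proof (induction k)
  case 0
  show ?case
  proof (cases "l < R")
    case True thus ?thesis by simp
  next
    case False
    have "{S. S \<subseteq> {..<R} \<and> card S = \<mu> \<and> (\<Sum>S) mod R = l} = {}" using False R by auto
    hence "Pplus R \<mu> l = 0" unfolding Pplus_def by (simp only: card.empty)
    thus ?thesis by simp
  qed
next
  case (Suc k)
  have "Pplus R \<mu> ((l + k * \<mu>) mod R) \<le> Pplus R \<mu> (((l + k * \<mu>) mod R + \<mu>) mod R)"
    by (rule Pplus_shift_le[OF R])
  also have "((l + k * \<mu>) mod R + \<mu>) mod R = (l + Suc k * \<mu>) mod R"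
    by (simp add: mod_add_right_eq algebra_simps)
  finally show ?case using Suc by simp
qed

lemma Pplus_const:
  assumes R: "0 < R" and g: "gcd R \<mu> = 1" and l: "l < R" "l' < R"
  shows "Pplus R \<mu> l = Pplus R \<mu> l'"
proof -
  have reach: "\<exists>k. (a + k * \<mu>) mod R = b" if "a < R" "b < R" for a b
  proof (cases "\<mu> = 0")
    case True
    hence "R = 1" using g by simp
    thus ?thesis using that by simp
  next
    case False
    obtain x y where xy: "\<mu> * x = R * y + gcd \<mu> R" using bezout_nat[OF False, of R] by auto
    hence xy1: "\<mu> * x = R * y + 1" using g by (simp add: gcd.commute)
    define t where "t = b + R - a"
    have "(t * x) * \<mu> = t * (\<mu> * x)" by (simp add: algebra_simps)
    hence "a + (t * x) * \<mu> = a + t * (R * y + 1)" using xy1 by simp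
    also have "\<dots> = (a + t) + R * (t * y)" by (simp add: algebra_simps)
    also have "a + t = b + R" unfolding t_def using that by simp
    also have "b + R + R * (t * y) = b + R * (1 + t * y)" by (simp add: algebra_simps)
    finally have e: "a + (t * x) * \<mu> = b + R * (1 + t * y)" .
    have "(b + R * (1 + t * y)) mod R = b mod R" by (rule mod_mult_self2)
    hence "(a + (t * x) * \<mu>) mod R = b mod R" by (simp only: e)
    thus ?thesis using that by auto
  qed
  obtain k where k: "(l + k * \<mu>) mod R = l'" using reach[OF l] by auto
  obtain k' where k': "(l' + k' * \<mu>) mod R = l" using reach[OF l(2) l(1)] by auto
  show ?thesis using Pplus_iter_le[OF R, of \<mu> l k] Pplus_iter_le[OF R, of \<mu> l' k'] k k' by simp
qed




context gd begin

lemma spt_empty: "(x :: nat \<Rightarrow> 'a) \<in> vecs (q+1) \<Longrightarrow> spt x = {} \<Longrightarrow> x = (\<lambda>j. 0)"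
proof -
  assume x: "x \<in> vecs (q+1)" and s: "spt x = {}"
  have "x \<in> sup_on {}" using spt_sup[OF x, of "{}"] s by simp
  thus "x = (\<lambda>j. 0)" unfolding sup_on_def by auto
qed

lemma coset_weight_in:
  assumes v: "v \<in> vecs (q+1)"
  shows "coset_weight (q+1) (coset_of CC v) \<in> hw (q+1) ` coset_of CC v"
    and "\<And>x. x \<in> coset_of CC v \<Longrightarrow> coset_weight (q+1) (coset_of CC v) \<le> hw (q+1) x"
proof -
  have f: "finite (hw (q+1) ` coset_of CC v)" using finite_coset[OF v] by auto
  have ne: "hw (q+1) ` coset_of CC v \<noteq> {}" using coset_self[OF v] by auto
  show "coset_weight (q+1) (coset_of CC v) \<in> hw (q+1) ` coset_of CC v"
    unfolding coset_weight_def using Min_in[OF f ne] .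
  fix x assume "x \<in> coset_of CC v"
  thus "coset_weight (q+1) (coset_of CC v) \<le> hw (q+1) x"
    unfolding coset_weight_def using Min_le[OF f] by auto
qed

lemma coset_rep:
  assumes "is_coset (q+1) CC U" "coset_weight (q+1) U = W"
  shows "\<exists>y \<in> vecs (q+1). hw (q+1) y = W \<and> U = coset_of CC y"
proof -
  obtain v where v: "v \<in> vecs (q+1)" "U = coset_of CC v" using assms unfolding is_coset_def by auto
  obtain y where y: "y \<in> coset_of CC v" "hw (q+1) y = W" using coset_weight_in(1)[OF v(1)] assms v by auto
  have "y \<in> vecs (q+1)" using y coset_vecs[OF v(1)] by auto
  moreover have "U = coset_of CC y" using coset_eq[OF v(1) y(1)] v by simp
  ultimately show ?thesis using y by auto
qed

lemma weight2_rep: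
  fixes y :: "nat \<Rightarrow> 'a"
  assumes "y \<in> vecs (q+1)" "hw (q+1) y = 2"
  shows "\<exists>j1 j2. j1 < j2 \<and> j2 < q + 1 \<and> y j1 \<noteq> 0 \<and> y j2 \<noteq> 0 \<and> y = v2 j1 j2 (y j1) (y j2)"
proof -
  have "card (spt y) = 2" using assms hw_spt by simp
  then obtain a b where ab: "spt y = {a, b}" "a \<noteq> b" by (auto simp: card_Suc_eq numeral_eq_Suc)
  define j1 where "j1 = min a b"
  define j2 where "j2 = max a b"
  have s: "spt y = {j1, j2}" "j1 < j2" using ab unfolding j1_def j2_def by (auto simp: min_def max_def)
  hence "j1 < q + 1" "j2 < q + 1" "y j1 \<noteq> 0" "y j2 \<noteq> 0" unfolding spt_def by auto
  moreover have "y = v2 j1 j2 (y j1) (y j2)"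
  proof
    fix j show "y j = v2 j1 j2 (y j1) (y j2) j"
    proof (cases "j \<in> {j1, j2}")
      case False
      hence "j \<notin> spt y" using s by auto
      moreover have "y \<in> sup_on (spt y)" using spt_sup[OF assms(1), of "spt y"] by simp
      ultimately have "y j = 0" unfolding sup_on_def by auto
      thus ?thesis using False unfolding v2_def by auto
    qed (auto simp: v2_def)
  qed
  ultimately show ?thesis using s by blast
qed

lemma v2_vecs: "j1 < q + 1 \<Longrightarrow> j2 < q + 1 \<Longrightarrow> v2 j1 j2 g1 g2 \<in> vecs (q+1)"
  unfolding v2_def vecs_def by auto

end

context gd2 begin

lemma cw_VV: "coset_weight (q+1) VV = 2"
proof -
  have "coset_weight (q+1) VV \<in> hw (q+1) ` VV" using coset_weight_in(1)[OF vv_vecs] unfolding VV_def .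
  then obtain x where x: "x \<in> VV" "hw (q+1) x = coset_weight (q+1) VV" by auto
  have le: "coset_weight (q+1) VV \<le> 2" using coset_weight_in(2)[OF vv_vecs vv_in[unfolded VV_def]] hw_vv unfolding VV_def by simp
  show ?thesis
  proof (rule ccontr)
    assume "coset_weight (q+1) VV \<noteq> 2"
    hence "card (spt x) + 3 \<le> d" using le x d5 hw_spt by auto
    hence "x = vv" using near_vv[OF x(1)] by auto
    thus False using x hw_vv \<open>coset_weight (q+1) VV \<noteq> 2\<close> by simp
  qed
qed

lemma is_coset_VV: "is_coset (q+1) CC VV"
  unfolding is_coset_def VV_def using vv_vecs by auto

end

context gd begin

lemma weight2_cosets:
  assumes "is_coset (q+1) CC U" "coset_weight (q+1) U = 2"
  shows "\<exists>j1 j2 g1 g2. gd2 m d q j1 j2 g1 g2 \<and> U = coset_of CC (v2 j1 j2 g1 g2)"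
proof -
  obtain y where y: "y \<in> vecs (q+1)" "hw (q+1) y = 2" "U = coset_of CC y" using coset_rep[OF assms] by auto
  obtain j1 j2 where j: "j1 < j2" "j2 < q + 1" "y j1 \<noteq> 0" "y j2 \<noteq> 0" "y = v2 j1 j2 (y j1) (y j2)"
    using weight2_rep[OF y(1,2)] by auto
  have "gd2 m d q j1 j2 (y j1) (y j2)"
    by (unfold_locales) (use j in auto)
  moreover have "U = coset_of CC (v2 j1 j2 (y j1) (y j2))" using y(3) j(5) by simp
  ultimately show ?thesis by blast
qed

lemma card_exact_spt:
  assumes T: "T \<subseteq> {..<q+1}"
  shows "card {y \<in> vecs (q+1). spt y = T} = (q - 1) ^ card T"
proof -
  have fT: "finite T" using T finite_subset by auto
  let ?P = "PiE T (\<lambda>_. UNIV - {0::'a})"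
  have "{y \<in> vecs (q+1). spt y = T} = extz T ` ?P"
  proof (intro set_eqI iffI)
    fix y assume y: "y \<in> {y \<in> vecs (q+1). spt y = T}"
    hence yz: "\<And>j. j \<notin> T \<Longrightarrow> y j = 0" using spt_sup[of y T] unfolding sup_on_def by auto
    have "y = extz T (restrict y T)" unfolding extz_def using yz by (auto simp: fun_eq_iff)
    moreover have "restrict y T \<in> ?P" using y unfolding spt_def by auto
    ultimately show "y \<in> extz T ` ?P" by blast
  next
    fix y assume "y \<in> extz T ` ?P"
    then obtain f where f: "f \<in> ?P" "y = extz T f" by auto
    have "y \<in> vecs (q+1)" using f T unfolding extz_def vecs_def by auto
    moreover have "spt y = T" using f T unfolding extz_def spt_def by (auto simp: PiE_def Pi_def)
    ultimately show "y \<in> {y \<in> vecs (q+1). spt y = T}" by simp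
  qed
  moreover have "inj_on (extz T) ?P"
  proof (rule inj_onI)
    fix f g assume f: "f \<in> ?P" and g: "g \<in> ?P" and e: "extz T f = extz T g"
    show "f = g"
    proof
      fix i show "f i = g i"
        using f g fun_cong[OF e, of i] unfolding extz_def by (cases "i \<in> T") (auto simp: PiE_def extensional_def)
    qed
  qed
  ultimately have "card {y \<in> vecs (q+1). spt y = T} = card ?P" by (simp add: card_image)
  also have "\<dots> = (q - 1) ^ card T" using fT qdef by (simp add: card_PiE card_Diff_subset)
  finally show ?thesis .
qed

lemma card_W2: "card {y \<in> (vecs (q+1) :: (nat \<Rightarrow> 'a) set). hw (q+1) y = 2} = ((q+1) choose 2) * (q - 1) ^ 2"
proof -
  have "B (q+1) 2 (vecs (q+1) :: (nat \<Rightarrow> 'a) set) = (\<Sum>T\<in>Tw 2. EE (vecs (q+1)) T)" using B_sum[OF finite_vecs] .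
  also have "\<dots> = (\<Sum>T\<in>Tw 2. (q - 1) ^ 2)"
  proof (intro sum.cong refl)
    fix T assume "T \<in> Tw 2"
    hence T: "T \<subseteq> {..<q+1}" "card T = 2" unfolding Tw_def by auto
    show "EE (vecs (q+1)) T = (q - 1) ^ 2" unfolding EE_def using card_exact_spt[OF T(1)] T(2) by simp
  qed
  also have "\<dots> = ((q+1) choose 2) * (q - 1) ^ 2"
    using n_subsets[of "{..<q+1}" 2] unfolding Tw_def by simp
  finally show ?thesis unfolding B_def .
qed

lemma card_weight2_cosets:
  "card {U. is_coset (q+1) CC U \<and> coset_weight (q+1) U = 2} = ((q+1) choose 2) * (q - 1) ^ 2"
proof -
  let ?W = "{y \<in> (vecs (q+1) :: (nat \<Rightarrow> 'a) set). hw (q+1) y = 2}"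
  have inj: "inj_on (coset_of CC) ?W"
  proof (rule inj_onI)
    fix y y' assume y: "y \<in> ?W" and y': "y' \<in> ?W" and e: "coset_of CC y = coset_of CC y'"
    have "y' \<in> coset_of CC y" using coset_self[of y'] y' e by auto
    hence c: "(\<lambda>j. y' j - y j) \<in> CC" using coset_iff y by auto
    have s: "spt (\<lambda>j. y' j - y j) \<subseteq> spt y' \<union> spt y" by (rule spt_diff_sub)
    have "card (spt y' \<union> spt y) \<le> card (spt y') + card (spt y)" by (rule card_Un_le)
    hence "card (spt y' \<union> spt y) \<le> d - 1" using y y' d5 hw_spt by auto
    hence "(\<lambda>j. y' j - y j) = (\<lambda>j. 0)" using MDS_sub[OF c s] by simp
    thus "y = y'" by (auto simp: fun_eq_iff)
  qed
  have "coset_of CC ` ?W = {U. is_coset (q+1) CC U \<and> coset_weight (q+1) U = 2}"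
  proof (intro set_eqI iffI)
    fix U assume "U \<in> coset_of CC ` ?W"
    then obtain y where y: "y \<in> ?W" "U = coset_of CC y" by auto
    obtain j1 j2 where j: "j1 < j2" "j2 < q + 1" "y j1 \<noteq> 0" "y j2 \<noteq> 0" "y = v2 j1 j2 (y j1) (y j2)"
      using weight2_rep[of y] y by auto
    interpret g2: gd2 m d q j1 j2 "y j1" "y j2" by (unfold_locales) (use j in auto)
    have "U = g2.VV" unfolding g2.VV_def g2.vv_def using y(2) j(5) by simp
    thus "U \<in> {U. is_coset (q+1) CC U \<and> coset_weight (q+1) U = 2}" using g2.cw_VV g2.is_coset_VV by simp
  next
    fix U assume "U \<in> {U. is_coset (q+1) CC U \<and> coset_weight (q+1) U = 2}"
    then obtain y where "y \<in> vecs (q+1)" "hw (q+1) y = 2" "U = coset_of CC y" using coset_rep by blast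
    thus "U \<in> coset_of CC ` ?W" by auto
  qed
  thus ?thesis using card_image[OF inj] card_W2 by simp
qed

lemma weight0_coset:
  assumes "is_coset (q+1) CC U" "coset_weight (q+1) U = 0"
  shows "U = CC"
proof -
  obtain y where y: "y \<in> vecs (q+1)" "hw (q+1) y = 0" "U = coset_of CC y" using coset_rep[OF assms] by auto
  have "spt y = {}" using y hw_spt by simp
  hence "y = (\<lambda>j. 0)" using spt_empty y by simp
  thus ?thesis using y coset_zero by simp
qed

lemma weight1_formula:
  assumes "is_coset (q+1) CC U" "coset_weight (q+1) U = 1"
  shows "int (B (q+1) w U) = int (B (q+1) w CC) + GG 1 w - GG 0 w"
proof -
  obtain y where y: "y \<in> vecs (q+1)" "hw (q+1) y = 1" "U = coset_of CC y" using coset_rep[OF assms] by auto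
  have Y: "YY U = {y}"
  proof (intro set_eqI iffI)
    fix z assume z: "z \<in> YY U"
    hence zU: "z \<in> coset_of CC y" "card (spt z) \<le> d - 2" unfolding YY_def hw_spt using y by auto
    hence c: "(\<lambda>j. z j - y j) \<in> CC" using coset_iff y by auto
    have s: "spt (\<lambda>j. z j - y j) \<subseteq> spt z \<union> spt y" by (rule spt_diff_sub)
    have "card (spt z \<union> spt y) \<le> card (spt z) + card (spt y)" by (rule card_Un_le)
    hence "card (spt z \<union> spt y) \<le> d - 1" using zU y d5 hw_spt by auto
    hence "(\<lambda>j. z j - y j) = (\<lambda>j. 0)" using MDS_sub[OF c s] by simp
    thus "z \<in> {y}" by (auto simp: fun_eq_iff)
  next
    fix z assume "z \<in> {y}"
    thus "z \<in> YY U" unfolding YY_def using y coset_self d5 by auto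
  qed
  have "int (B (q+1) w U) - int (B (q+1) w CC) = FF (spt y) w - FF {} w"
    using general_formula[OF y(1)] y Y by simp
  also have "FF (spt y) w = GG 1 w" using FF_GG[of "spt y" w] spt_sub y hw_spt d5 by simp
  also have "FF {} w = GG 0 w" using FF_GG[of "{}" w] by simp
  finally show ?thesis by simp
qed

end



lemma binom_id:
  assumes d3: "3 \<le> d" and "d \<le> q"
  shows "real ((q - 1) choose (d - 2)) / real (q - 1) = real ((q - 2) choose (d - 3)) / real (d - 2)"
proof -
  have "Suc (d - 3) * (Suc (q - 2) choose Suc (d - 3)) = Suc (q - 2) * ((q - 2) choose (d - 3))"
    by (rule Suc_times_binomial)
  moreover have "Suc (d - 3) = d - 2" "Suc (q - 2) = q - 1" using d3 assms by auto
  ultimately have e: "(d - 2) * ((q - 1) choose (d - 2)) = (q - 1) * ((q - 2) choose (d - 3))" by simp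
  have "real (d - 2) * real ((q - 1) choose (d - 2)) = real (q - 1) * real ((q - 2) choose (d - 3))"
    using arg_cong[OF e, of real] by simp
  moreover have "real (q - 1) \<noteq> 0" "real (d - 2) \<noteq> 0" using d3 assms by auto
  ultimately show ?thesis by (simp add: field_simps)
qed

locale full = gd m d q + primel \<beta> q for m :: "nat \<Rightarrow> 'a::{field,finite}" and d q and \<beta> :: 'a
begin

abbreviation "Pc \<equiv> (\<forall>l1 < q - 1. \<forall>l2 < q - 1. Pplus (q - 1) (d - 2) l1 = Pplus (q - 1) (d - 2) l2)"

lemma gd2_P:
  assumes "gd2 m d q j1 j2 g1 g2"
  shows "\<exists>l<q-1. card (gd2.DD m d q j1 j2 g1 g2) = Pplus (q-1) (d-2) l"
proof -
  interpret H: gd2 m d q j1 j2 g1 g2 by (rule assms)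
  have "- g2 / g1 \<in> UNIV - {0}" using H.g12 by simp
  hence "- g2 / g1 \<in> (\<lambda>k. \<beta> ^ k) ` {..<q-1}" using beta_img by simp
  then obtain l where l: "l < q - 1" "\<beta> ^ l = - g2 / g1" by auto
  have "card H.DD = Pplus (q-1) (d-2) l" using H.card_DD Pplus_Ptimes[OF l(1)] l(2) by simp
  thus ?thesis using l by auto
qed

lemma coset2:
  assumes "is_coset (q+1) CC U" "coset_weight (q+1) U = 2"
  shows "\<exists>l<q-1. B (q+1) (d-2) U = Pplus (q-1) (d-2) l
     \<and> (\<forall>w. int (B (q+1) w U) = int (B (q+1) w CC) + GG 2 w + int (Pplus (q-1) (d-2) l) * GG (d-2) w - GG 0 w)
     \<and> (\<forall>w. w \<le> d - 3 \<and> w \<noteq> 2 \<longrightarrow> B (q+1) w U = 0) \<and> B (q+1) 2 U = 1"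
proof -
  obtain j1 j2 g1 g2 where H: "gd2 m d q j1 j2 g1 g2" "U = coset_of CC (v2 j1 j2 g1 g2)"
    using weight2_cosets[OF assms] by auto
  interpret H: gd2 m d q j1 j2 g1 g2 by (rule H(1))
  have U: "U = H.VV" unfolding H.VV_def H.vv_def using H(2) .
  obtain l where l: "l < q - 1" "card H.DD = Pplus (q-1) (d-2) l" using gd2_P[OF H(1)] by auto
  show ?thesis using U l H.formula_VV H.B_low by auto
qed

lemma Pc_same:
  assumes Pc
  shows "all_cosets_same_wd (q+1) CC 2"
  unfolding all_cosets_same_wd_def same_wd_def
proof (intro allI impI)
  fix U U' w assume a: "is_coset (q + 1) CC U \<and> is_coset (q + 1) CC U' \<and> coset_weight (q + 1) U = 2 \<and> coset_weight (q + 1) U' = 2"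
  obtain l where l: "l < q - 1" "\<forall>w. int (B (q+1) w U) = int (B (q+1) w CC) + GG 2 w + int (Pplus (q-1) (d-2) l) * GG (d-2) w - GG 0 w"
    using coset2[of U] a by auto
  obtain l' where l': "l' < q - 1" "\<forall>w. int (B (q+1) w U') = int (B (q+1) w CC) + GG 2 w + int (Pplus (q-1) (d-2) l') * GG (d-2) w - GG 0 w"
    using coset2[of U'] a by auto
  have "Pplus (q-1) (d-2) l = Pplus (q-1) (d-2) l'" using assms l l' by blast
  hence "int (B (q+1) w U) = int (B (q+1) w U')" using l(2) l'(2) by simp
  thus "B (q+1) w U = B (q+1) w U'" by simp
qed

lemma test_coset:
  assumes l: "l < q - 1"
  shows "is_coset (q+1) CC (coset_of CC (v2 0 1 1 (- (\<beta> ^ l))))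
    \<and> coset_weight (q+1) (coset_of CC (v2 0 1 1 (- (\<beta> ^ l)))) = 2
    \<and> B (q+1) (d-2) (coset_of CC (v2 0 1 1 (- (\<beta> ^ l)))) = Pplus (q-1) (d-2) l"
proof -
  interpret H: gd2 m d q 0 1 1 "- (\<beta> ^ l)" by (unfold_locales) (use beta_nz d5 dq in auto)
  have "card H.DD = Pplus (q-1) (d-2) l" using H.card_DD Pplus_Ptimes[OF l] by simp
  thus ?thesis using H.cw_VV H.is_coset_VV H.B_low unfolding H.VV_def H.vv_def by simp
qed

lemma same_Pc:
  assumes "all_cosets_same_wd (q+1) CC 2"
  shows Pc
proof (intro allI impI)
  fix l1 l2 assume l: "l1 < q - 1" "l2 < q - 1"
  let ?U1 = "coset_of CC (v2 0 1 1 (- (\<beta> ^ l1)))"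
  let ?U2 = "coset_of CC (v2 0 1 1 (- (\<beta> ^ l2)))"
  have T1: "is_coset (q+1) CC ?U1" "coset_weight (q+1) ?U1 = 2" "B (q+1) (d-2) ?U1 = Pplus (q-1) (d-2) l1"
    using test_coset[OF l(1)] by auto
  have T2: "is_coset (q+1) CC ?U2" "coset_weight (q+1) ?U2 = 2" "B (q+1) (d-2) ?U2 = Pplus (q-1) (d-2) l2"
    using test_coset[OF l(2)] by auto
  have "same_wd (q+1) ?U1 ?U2" using assms T1(1,2) T2(1,2) unfolding all_cosets_same_wd_def by blast
  hence "B (q+1) (d-2) ?U1 = B (q+1) (d-2) ?U2" unfolding same_wd_def by blast
  thus "Pplus (q - 1) (d - 2) l1 = Pplus (q - 1) (d - 2) l2" using T1(3) T2(3) by simp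
qed

lemma Pc_value:
  assumes Pc "l < q - 1"
  shows "real (Pplus (q-1) (d-2) l) = real ((q-1) choose (d-2)) / real (q-1)"
    and "(q - 1) * Pplus (q-1) (d-2) l = (q-1) choose (d-2)"
proof -
  have q1: "0 < q - 1" using d5 dq by simp
  have "(\<Sum>l'<q-1. Pplus (q-1) (d-2) l') = (\<Sum>l'<q-1. Pplus (q-1) (d-2) l)"
  proof (rule sum.cong[OF refl])
    fix l' assume "l' \<in> {..<q-1}"
    hence "l' < q - 1" by simp
    thus "Pplus (q-1) (d-2) l' = Pplus (q-1) (d-2) l" using assms(1) assms(2) by blast
  qed
  also have "\<dots> = (q - 1) * Pplus (q-1) (d-2) l" by simp
  finally have e: "(q-1) choose (d-2) = (q - 1) * Pplus (q-1) (d-2) l" using Pplus_sum[OF q1, of "d-2"] by linarith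
  thus "(q - 1) * Pplus (q-1) (d-2) l = (q-1) choose (d-2)" by simp
  have "real ((q-1) choose (d-2)) = real (q - 1) * real (Pplus (q-1) (d-2) l)" using arg_cong[OF e, of real] by simp
  moreover have "real (q - 1) \<noteq> 0" using q1 by simp
  ultimately show "real (Pplus (q-1) (d-2) l) = real ((q-1) choose (d-2)) / real (q-1)"
    by (simp add: nonzero_eq_divide_eq mult.commute)
qed

lemma Pc_formulas:
  assumes Pc "is_coset (q+1) CC U" "coset_weight (q+1) U = 2"
  shows "formulas_ii q d CC U"
proof -
  obtain l where l: "l < q - 1" "B (q+1) (d-2) U = Pplus (q-1) (d-2) l"
    "\<forall>w. int (B (q+1) w U) = int (B (q+1) w CC) + GG 2 w + int (Pplus (q-1) (d-2) l) * GG (d-2) w - GG 0 w"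
    "\<forall>w. w \<le> d - 3 \<and> w \<noteq> 2 \<longrightarrow> B (q+1) w U = 0" "B (q+1) 2 U = 1"
    using coset2[OF assms(2,3)] by auto
  have PV: "real (Pplus (q-1) (d-2) l) = real ((q-1) choose (d-2)) / real (q-1)" using Pc_value[OF assms(1) l(1)] by simp
  have bi: "real ((q - 1) choose (d - 2)) / real (q - 1) = real ((q - 2) choose (d - 3)) / real (d - 2)"
    using binom_id[of d q] d5 dq by simp
  have fw: "real (B (q+1) w U) = real_of_int (int (B (q+1) w CC) - Omega0 q d w + Omega2 q d w)
          + real_of_int (neg1pow (int w - int d) * int ((q+3-d) choose (q+1-w))) * (real ((q-1) choose (d-2)) / real (q-1))"
    if w: "d - 1 \<le> w" "w \<le> q + 1" for w
  proof -
    have "int (B (q+1) w U) = int (B (q+1) w CC) - Omega0 q d w + Omega2 q d w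
       + neg1pow (int w - int d) * int ((q+3-d) choose (q+1-w)) * int (Pplus (q-1) (d-2) l)"
    proof -
      have e: "int (B (q+1) w U) = int (B (q+1) w CC) + GG 2 w + int (Pplus (q-1) (d-2) l) * GG (d-2) w - GG 0 w"
        using l(3) by blast
      show ?thesis unfolding e GG0[OF w] GG2[OF w] GGd[OF w] by (simp add: algebra_simps)
    qed
    hence "real (B (q+1) w U) = real_of_int (int (B (q+1) w CC) - Omega0 q d w + Omega2 q d w)
       + real_of_int (neg1pow (int w - int d) * int ((q+3-d) choose (q+1-w))) * real (Pplus (q-1) (d-2) l)"
      by (subst of_int_of_nat_eq[symmetric]) (simp only: of_int_add of_int_mult of_int_diff of_int_of_nat_eq)
    thus ?thesis using PV by simp
  qed
  show ?thesis unfolding formulas_ii_def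
  proof (intro conjI allI impI)
    fix w assume "w \<le> d - 3 \<and> w \<noteq> 2" thus "B (q+1) w U = 0" using l(4) by blast
  next
    show "B (q+1) 2 U = 1" using l(5) .
  next
    show "real (B (q+1) (d-2) U) = real ((q-1) choose (d-2)) / real (q-1)" using l(2) PV by simp
  next
    show "real ((q-1) choose (d-2)) / real (q-1) = real ((q-2) choose (d-3)) / real (d-2)" using bi .
  next
    fix w assume "d - 1 \<le> w \<and> w \<le> q + 1"
    thus "real (B (q+1) w U) = real_of_int (int (B (q+1) w CC) - Omega0 q d w + Omega2 q d w)
          + real_of_int (neg1pow (int w - int d) * int ((q+3-d) choose (q+1-w))) * (real ((q-1) choose (d-2)) / real (q-1))"
      using fw by blast
  qed
qed

lemma two_reg:
  assumes "all_cosets_same_wd (q+1) CC 2"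
  shows "two_regular (q+1) CC"
proof -
  have "all_cosets_same_wd (q+1) CC 0"
    unfolding all_cosets_same_wd_def same_wd_def using weight0_coset by auto
  moreover have "all_cosets_same_wd (q+1) CC 1"
    unfolding all_cosets_same_wd_def same_wd_def
  proof (intro allI impI)
    fix U U' w assume a: "is_coset (q + 1) CC U \<and> is_coset (q + 1) CC U' \<and> coset_weight (q + 1) U = 1 \<and> coset_weight (q + 1) U' = 1"
    have "int (B (q+1) w U) = int (B (q+1) w U')" using weight1_formula[of U w] weight1_formula[of U' w] a by simp
    thus "B (q+1) w U = B (q+1) w U'" by simp
  qed
  ultimately show ?thesis unfolding two_regular_def using assms by auto
qed

end



theorem theorem5p1:
  fixes m :: "nat \<Rightarrow> 'a::{field,finite}"
    and d j1 j2 l0 :: nat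
    and \<gamma>1 \<gamma>2 \<beta> :: 'a
  defines "q \<equiv> card (UNIV :: 'a set)"
  defines "n \<equiv> q + 1"
  defines "C \<equiv> gdrs_code m q d"
  defines "V \<equiv> coset_of C (v2 j1 j2 \<gamma>1 \<gamma>2)"
  assumes enum: "bij_betw m {..<q} (UNIV :: 'a set)" and mq: "m (q - 1) = 0"
    and d5: "5 \<le> d" and dq: "d \<le> q"
    and j: "j1 < n" "j2 < n" "j1 \<noteq> j2"
    and g: "\<gamma>1 \<noteq> 0" "\<gamma>2 \<noteq> 0"
    and Vw: "coset_weight n V = 2"
    and prim: "\<forall>x::'a. x \<noteq> 0 \<longrightarrow> (\<exists>k::nat. \<beta> ^ k = x)"
    and l0: "l0 < q - 1" "\<beta> ^ l0 = - \<gamma>2 / \<gamma>1"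
  shows
    "(\<forall>j1' j2'. j1' < n \<and> j2' < n \<and> j1' \<noteq> j2' \<longrightarrow>
        same_wd n V (coset_of C (v2 j1' j2' \<gamma>1 \<gamma>2)))
   \<and> (\<forall>w. w \<le> d - 3 \<and> w \<noteq> 2 \<longrightarrow> B n w V = 0)
   \<and> B n 2 V = 1
   \<and> B n (d - 2) V = Pplus (q - 1) (d - 2) l0
   \<and> Pplus (q - 1) (d - 2) l0 = Ptimes (d - 2) (- \<gamma>2 / \<gamma>1)
   \<and> (\<forall>w. d - 1 \<le> w \<and> w \<le> q + 1 \<longrightarrow>
        int (B n w V) = int (B n w C) - Omega0 q d w + Omega2 q d w
          + neg1pow (int w - int d) * int ((q + 3 - d) choose (q + 1 - w))
            * int (Pplus (q - 1) (d - 2) l0))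
   \<and> card {U. is_coset n C U \<and> coset_weight n U = 2} = (n choose 2) * (q - 1) ^ 2
   \<and> ((\<forall>l1 < q - 1. \<forall>l2 < q - 1. Pplus (q - 1) (d - 2) l1 = Pplus (q - 1) (d - 2) l2)
        \<longleftrightarrow> all_cosets_same_wd n C 2)
   \<and> (all_cosets_same_wd n C 2 \<longrightarrow>
        (\<forall>U. is_coset n C U \<and> coset_weight n U = 2 \<longrightarrow> formulas_ii q d C U))
   \<and> (gcd (q - 1) (d - 2) = 1 \<longrightarrow>
        (\<forall>l1 < q - 1. \<forall>l2 < q - 1. Pplus (q - 1) (d - 2) l1 = Pplus (q - 1) (d - 2) l2)
        \<and> all_cosets_same_wd n C 2
        \<and> (\<forall>U. is_coset n C U \<and> coset_weight n U = 2 \<longrightarrow> formulas_ii q d C U)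
        \<and> two_regular n C
        \<and> (q - 1) dvd ((q - 1) choose (d - 2))
        \<and> real ((q - 1) choose (d - 2)) / real (q - 1) = real ((q - 2) choose (d - 3)) / real (d - 2))"
proof -
  have qd: "q = card (UNIV::'a set)" using q_def by simp
  have nq: "n = q + 1" using n_def by simp
  interpret F: full m d q \<beta>
    by unfold_locales (use qd enum d5 dq prim in auto)
  have CC: "F.CC = C" unfolding F.CC_def C_def ..
  interpret H: gd2 m d q j1 j2 \<gamma>1 \<gamma>2 by unfold_locales (use j g nq in auto)
  have HV: "H.VV = V" unfolding H.VV_def H.vv_def V_def CC ..
  have PT: "Pplus (q - 1) (d - 2) l0 = Ptimes (d - 2) (- \<gamma>2 / \<gamma>1)"
    using F.Pplus_Ptimes[OF l0(1)] l0(2) by simp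
  have cDD: "card H.DD = Pplus (q - 1) (d - 2) l0" using H.card_DD PT by simp
  have P1: "\<forall>j1' j2'. j1' < n \<and> j2' < n \<and> j1' \<noteq> j2' \<longrightarrow>
        same_wd n V (coset_of C (v2 j1' j2' \<gamma>1 \<gamma>2))"
  proof (intro allI impI)
    fix j1' j2' assume a: "j1' < n \<and> j2' < n \<and> j1' \<noteq> j2'"
    interpret H': gd2 m d q j1' j2' \<gamma>1 \<gamma>2 by unfold_locales (use a g nq in auto)
    have HV': "H'.VV = coset_of C (v2 j1' j2' \<gamma>1 \<gamma>2)" unfolding H'.VV_def H'.vv_def CC ..
    have cc: "card H'.DD = card H.DD" using H'.card_DD H.card_DD by simp
    show "same_wd n V (coset_of C (v2 j1' j2' \<gamma>1 \<gamma>2))"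
      unfolding same_wd_def
    proof
      fix w
      have "int (B (q+1) w H.VV) = int (B (q+1) w H'.VV)" using H.formula_VV[of w] H'.formula_VV[of w] cc by simp
      thus "B n w V = B n w (coset_of C (v2 j1' j2' \<gamma>1 \<gamma>2))" using HV HV' nq by simp
    qed
  qed
  have P2: "\<forall>w. w \<le> d - 3 \<and> w \<noteq> 2 \<longrightarrow> B n w V = 0" using H.B_low(3) HV nq by auto
  have P3: "B n 2 V = 1" using H.B_low(1) HV nq by simp
  have P4: "B n (d - 2) V = Pplus (q - 1) (d - 2) l0" using H.B_low(2) HV nq cDD by simp
  have P6: "\<forall>w. d - 1 \<le> w \<and> w \<le> q + 1 \<longrightarrow>
        int (B n w V) = int (B n w C) - Omega0 q d w + Omega2 q d w
          + neg1pow (int w - int d) * int ((q + 3 - d) choose (q + 1 - w))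
            * int (Pplus (q - 1) (d - 2) l0)"
  proof (intro allI impI)
    fix w assume "d - 1 \<le> w \<and> w \<le> q + 1"
    hence w: "d - 1 \<le> w" "w \<le> q + 1" by auto
    have e: "int (B (q+1) w H.VV) = int (B (q+1) w F.CC) + F.GG 2 w + int (card H.DD) * F.GG (d - 2) w - F.GG 0 w"
      by (rule H.formula_VV)
    show "int (B n w V) = int (B n w C) - Omega0 q d w + Omega2 q d w
          + neg1pow (int w - int d) * int ((q + 3 - d) choose (q + 1 - w))
            * int (Pplus (q - 1) (d - 2) l0)"
      using e unfolding HV CC nq cDD F.GG0[OF w] F.GG2[OF w] F.GGd[OF w] by (simp add: algebra_simps)
  qed
  have P7: "card {U. is_coset n C U \<and> coset_weight n U = 2} = (n choose 2) * (q - 1) ^ 2"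
    using F.card_weight2_cosets unfolding CC nq .
  have P8: "(\<forall>l1 < q - 1. \<forall>l2 < q - 1. Pplus (q - 1) (d - 2) l1 = Pplus (q - 1) (d - 2) l2)
        \<longleftrightarrow> all_cosets_same_wd n C 2"
    using F.Pc_same F.same_Pc unfolding CC nq by blast
  have P9: "all_cosets_same_wd n C 2 \<longrightarrow>
        (\<forall>U. is_coset n C U \<and> coset_weight n U = 2 \<longrightarrow> formulas_ii q d C U)"
    using F.Pc_formulas F.same_Pc unfolding CC nq by blast
  have P10: "gcd (q - 1) (d - 2) = 1 \<longrightarrow>
        (\<forall>l1 < q - 1. \<forall>l2 < q - 1. Pplus (q - 1) (d - 2) l1 = Pplus (q - 1) (d - 2) l2)
        \<and> all_cosets_same_wd n C 2
        \<and> (\<forall>U. is_coset n C U \<and> coset_weight n U = 2 \<longrightarrow> formulas_ii q d C U)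
        \<and> two_regular n C
        \<and> (q - 1) dvd ((q - 1) choose (d - 2))
        \<and> real ((q - 1) choose (d - 2)) / real (q - 1) = real ((q - 2) choose (d - 3)) / real (d - 2)"
  proof
    assume gc: "gcd (q - 1) (d - 2) = 1"
    have q1: "0 < q - 1" using d5 dq by simp
    have Pc: "\<forall>l1 < q - 1. \<forall>l2 < q - 1. Pplus (q - 1) (d - 2) l1 = Pplus (q - 1) (d - 2) l2"
      using Pplus_const[OF q1 gc] by blast
    have S: "all_cosets_same_wd n C 2" using P8 Pc by blast
    have dv: "(q - 1) dvd ((q - 1) choose (d - 2))" using F.Pc_value(2)[OF Pc q1] by (metis dvd_triv_left)
    have TR: "two_regular n C" using F.two_reg S unfolding CC nq by blast
    have bi: "real ((q - 1) choose (d - 2)) / real (q - 1) = real ((q - 2) choose (d - 3)) / real (d - 2)"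
      using binom_id[of d q] d5 dq by simp
    show "(\<forall>l1 < q - 1. \<forall>l2 < q - 1. Pplus (q - 1) (d - 2) l1 = Pplus (q - 1) (d - 2) l2)
        \<and> all_cosets_same_wd n C 2
        \<and> (\<forall>U. is_coset n C U \<and> coset_weight n U = 2 \<longrightarrow> formulas_ii q d C U)
        \<and> two_regular n C
        \<and> (q - 1) dvd ((q - 1) choose (d - 2))
        \<and> real ((q - 1) choose (d - 2)) / real (q - 1) = real ((q - 2) choose (d - 3)) / real (d - 2)"
      using Pc S P9 TR dv bi by blast
  qed
  show ?thesis using P1 P2 P3 P4 PT P6 P7 P8 P9 P10 by blast
qed



end
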